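(* Define, for a bond $b=(i,i+r)\in\mathcal B$, the atomistic contribution $$a_b(y)=\frac{|b\cap\Omega_a|}{r}\,\varphi\Big(\frac{r}{|b\cap\Omega_a|}\,D_{b\cap\Omega_a}y\Big)\ \text{ if } |b\cap\Omega_a|>0,\qquad a_b(y)=0\ \text{ otherwise},$$ and $E^{\rm acc}(y)=\sum_{b\in\mathcal B}a_b(y)+\sum_{b\in\mathcal B}c_b(y)$. Then for every $F>0$ and $v\in\mathcal U_0$, $(E^{\rm acc})'(Fx;v)=0$. More precisely, for every $b=(i,i+r)\in\mathcal B$ and every $v\in\mathcal U$, $a_b'(Fx;v)+c_b'(Fx;v)=e_b'(Fx;v)=\varphi'(rF)(v_{i+r}-v_i)$.
   Context: One-dimensional setting. Fix integers $N\ge 1$, $R\ge 1$. Let $\Omega=(-N-R,N+R)$, $\Omega_c=(0,N)$, $\Omega_a=\Omega\setminus[0,N]$, $\mathcal I=\Omega\cap\mathbb Z$, $\mathcal I_a=\Omega_a\cap\mathbb Z$, $\mathcal I_D=\{i\in\mathbb Z: N\le |i|<N+R\}$. Let $\mathcal U$ be the set of real-valued functions $y$ on $\mathcal I_a\cup[0,N]$ whose restriction to $(0,N)$ lies in $W^{1,\infty}(0,N)$ (identified with its continuous representative on $[0,N]$); write $y_i=y(i)$. Let $\mathcal U_0=\{u\in\mathcal U: u_i=0 \text{ for all } i\in\mathcal I_D\}$. For $F\in\mathbb R$, $Fx$ denotes the element $y\in\mathcal U$ with $y(x)=Fx$. Let $\varphi:\mathbb R\to\mathbb R$ be continuously differentiable.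 A bond $(i,i+r)$ ($i\in\mathbb Z$, $r\ge1$) is the open interval from $i$ to $i+r$; $\mathcal B=\{(i,i+r): 1\le r\le R,\ i\in\mathcal I,\ i+r\in\mathcal I\}$. Exact contribution of $b=(i,i+r)$: $e_b(y)=\varphi(y_{i+r}-y_i)$. Continuum contribution: $c_b(y)=\frac1r\int_{b\cap\Omega_c}\varphi(r\,y'(x))\,dx$. For a set $\omega=\bigcup_{m=1}^M(l_m,r_m)$ that is a finite union of pairwise disjoint open intervals with endpoints in the domain of $y$, $D_\omega y=\sum_{m=1}^M(y(r_m)-y(l_m))$ and $|\omega|$ is its total length (for $b\in\mathcal B$, $b\cap\Omega_a$ is such a set, with endpoints in $\mathcal I\cup\{0,N\}$). For a functional $G$ on $\mathcal U$, $G'(y;v)=\frac{d}{dt}G(y+tv)\big|_{t=0}$. *)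

theory Defs
  imports "HOL-Analysis.Analysis"
begin

text \<open>Deformations are real functions
  on the real line; only their values on the integer atoms of the atomistic region and on
  the continuum interval [0,N] are ever used.\<close>

definition Iset :: "nat \<Rightarrow> nat \<Rightarrow> int set" where
  "Iset N R = {i. - (int N + int R) < i \<and> i < int N + int R}"

definition ID :: "nat \<Rightarrow> nat \<Rightarrow> int set" where
  "ID N R = {i. int N \<le> \<bar>i\<bar> \<and> \<bar>i\<bar> < int N + int R}"

definition Omega_a :: "nat \<Rightarrow> nat \<Rightarrow> real set" where
  "Omega_a N R = {- (real N + real R)<..<real N + real R} - {0..real N}"

definition Omega_c :: "nat \<Rightarrow> real set" where
  "Omega_c N = {0<..<real N}"

text \<open>A bond (i, i+r) is encoded by the pair (i, r); as a set it is the open interval.\<close>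
definition bond :: "int \<Rightarrow> nat \<Rightarrow> real set" where
  "bond i r = {real_of_int i <..< real_of_int i + real r}"

definition bondset :: "nat \<Rightarrow> nat \<Rightarrow> (int \<times> nat) set" where
  "bondset N R = {(i, r). 1 \<le> r \<and> r \<le> R \<and> i \<in> Iset N R \<and> i + int r \<in> Iset N R}"

text \<open>Admissible deformations: restriction to (0,N) in W^{1,infinity}, i.e. (continuous
  representative) Lipschitz on [0,N].\<close>
definition U :: "nat \<Rightarrow> (real \<Rightarrow> real) set" where
  "U N = {y. \<exists>L. L-lipschitz_on {0..real N} y}"

definition U0 :: "nat \<Rightarrow> nat \<Rightarrow> (real \<Rightarrow> real) set" where
  "U0 N R = {u \<in> U N. \<forall>i \<in> ID N R. u (real_of_int i) = 0}"

text \<open>D_omega y for a finite union of disjoint open intervals: sum over connected components.\<close>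
definition Dw :: "real set \<Rightarrow> (real \<Rightarrow> real) \<Rightarrow> real" where
  "Dw \<omega> y = (\<Sum>c \<in> components \<omega>. y (Sup c) - y (Inf c))"

definition lenw :: "real set \<Rightarrow> real" where
  "lenw \<omega> = measure lborel \<omega>"

definition e_b :: "(real \<Rightarrow> real) \<Rightarrow> int \<Rightarrow> nat \<Rightarrow> (real \<Rightarrow> real) \<Rightarrow> real" where
  "e_b \<phi> i r y = \<phi> (y (real_of_int i + real r) - y (real_of_int i))"

definition c_b :: "(real \<Rightarrow> real) \<Rightarrow> nat \<Rightarrow> int \<Rightarrow> nat \<Rightarrow> (real \<Rightarrow> real) \<Rightarrow> real" where
  "c_b \<phi> N i r y = 1 / real r * integral (bond i r \<inter> Omega_c N) (\<lambda>x. \<phi> (real r * deriv y x))"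

definition a_b :: "(real \<Rightarrow> real) \<Rightarrow> nat \<Rightarrow> nat \<Rightarrow> int \<Rightarrow> nat \<Rightarrow> (real \<Rightarrow> real) \<Rightarrow> real" where
  "a_b \<phi> N R i r y =
     (let \<omega> = bond i r \<inter> Omega_a N R in
      if lenw \<omega> > 0 then lenw \<omega> / real r * \<phi> (real r / lenw \<omega> * Dw \<omega> y) else 0)"

definition E_acc :: "(real \<Rightarrow> real) \<Rightarrow> nat \<Rightarrow> nat \<Rightarrow> (real \<Rightarrow> real) \<Rightarrow> real" where
  "E_acc \<phi> N R y = (\<Sum>(i, r) \<in> bondset N R. a_b \<phi> N R i r y) + (\<Sum>(i, r) \<in> bondset N R. c_b \<phi> N i r y)"

definition has_gderiv :: "((real \<Rightarrow> real) \<Rightarrow> real) \<Rightarrow> (real \<Rightarrow> real) \<Rightarrow> (real \<Rightarrow> real) \<Rightarrow> real \<Rightarrow> bool" where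
  "has_gderiv G y v D \<longleftrightarrow> ((\<lambda>t. G (\<lambda>x. y x + t * v x)) has_real_derivative D) (at 0)"

end

theory Submission
  imports Defs
begin
lemma sub_intervals_sum:
  fixes g :: "real \<Rightarrow> real"
  assumes mono: "mono g" and fin: "finite G" and pos: "\<forall>j\<in>G. 0 < snd j"
    and sub: "\<forall>j\<in>G. c \<le> fst j \<and> fst j + snd j \<le> d" and cd: "c \<le> d"
    and disj: "pairwise (\<lambda>j j'. disjnt {fst j..fst j + snd j} {fst j'..fst j' + snd j'}) G"
  shows "(\<Sum>j\<in>G. g (fst j + snd j) - g (fst j)) \<le> g d - g c"
  using fin pos sub cd disj
proof (induction "card G" arbitrary: G d)
  case 0
  then have "G = {}" by simp
  then show ?case using mono \<open>c \<le> d\<close> by (simp add: monoD)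
next
  case (Suc n)
  then have "G \<noteq> {}" by auto
  define y0 where "y0 = Max (fst ` G)"
  have "y0 \<in> fst ` G" using Suc.prems \<open>G \<noteq> {}\<close> unfolding y0_def by (intro Max_in) auto
  then obtain j0 where j0: "j0 \<in> G" "fst j0 = y0" by auto
  define G' where "G' = G - {j0}"
  have cardG': "n = card G'" using Suc.hyps(2) j0 Suc.prems(1) unfolding G'_def by simp
  have le: "fst j + snd j < y0" if "j \<in> G'" for j
  proof -
    have jG: "j \<in> G" "j \<noteq> j0" using that unfolding G'_def by auto
    have "fst j \<le> y0" unfolding y0_def using Suc.prems(1) jG by auto
    moreover have "disjnt {fst j..fst j + snd j} {fst j0..fst j0 + snd j0}"
      using Suc.prems(5) jG j0 unfolding pairwise_def by blast
    moreover have "0 < snd j0" using Suc.prems(2) j0 by auto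
    ultimately show ?thesis using j0 unfolding disjnt_def
      by (smt (verit, best) atLeastAtMost_iff disjoint_iff)
  qed
  have IH: "(\<Sum>j\<in>G'. g (fst j + snd j) - g (fst j)) \<le> g y0 - g c"
  proof (rule Suc.hyps(1)[OF cardG'])
    show "finite G'" using Suc.prems(1) unfolding G'_def by simp
    show "\<forall>j\<in>G'. 0 < snd j" using Suc.prems(2) unfolding G'_def by simp
    show "\<forall>j\<in>G'. c \<le> fst j \<and> fst j + snd j \<le> y0" using Suc.prems(3) le unfolding G'_def
      by fastforce
    show "c \<le> y0" using Suc.prems(3) j0 by auto
    show "pairwise (\<lambda>j j'. disjnt {fst j..fst j + snd j} {fst j'..fst j' + snd j'}) G'"
      using Suc.prems(5) unfolding G'_def by (meson Diff_subset pairwise_subset)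
  qed
  have "(\<Sum>j\<in>G. g (fst j + snd j) - g (fst j)) = (g (fst j0 + snd j0) - g (fst j0)) + (\<Sum>j\<in>G'. g (fst j + snd j) - g (fst j))"
    unfolding G'_def using Suc.prems(1) j0(1) by (simp add: sum.remove)
  moreover have "fst j0 + snd j0 \<le> d" using Suc.prems(3) j0(1) by blast
  then have "g (fst j0 + snd j0) \<le> g d" using mono by (simp add: monoD)
  ultimately show ?case using IH j0 by simp
qed

lemma cball_Icc_left: "cball (x - h/2) (h/2) = {x - h..(x::real)}"
  by (simp add: cball_eq_atLeastAtMost)
lemma cball_Icc_right: "cball (y + k/2) (k/2) = {y..y + (k::real)}"
  by (simp add: cball_eq_atLeastAtMost)

lemma measure_Icc_real: "a \<le> b \<Longrightarrow> measure lebesgue {a..b::real} = b - a"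
  by simp

lemma K1:
  fixes g :: "real \<Rightarrow> real" and E U :: "real set"
  assumes mono: "mono g" and p: "0 < p" "p < q"
    and EU: "E \<subseteq> U" and U: "open U" "U \<in> lmeasurable"
    and lsl: "\<And>x \<delta>. x \<in> E \<Longrightarrow> 0 < \<delta> \<Longrightarrow> \<exists>h. 0 < h \<and> h < \<delta> \<and> g x - g (x - h) < p * h"
    and rsg: "\<And>x \<delta>. x \<in> E \<Longrightarrow> 0 < \<delta> \<Longrightarrow> \<exists>h. 0 < h \<and> h < \<delta> \<and> q * h < g (x + h) - g x"
  shows "\<exists>T. E \<subseteq> T \<and> T \<in> lmeasurable \<and> measure lebesgue T \<le> p / q * measure lebesgue U"
proof -
  define I where "I = (\<lambda>i::real\<times>real. {fst i - snd i..fst i})"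
  define J where "J = (\<lambda>i::real\<times>real. {fst i..fst i + snd i})"
  define K1 where "K1 = {i. fst i \<in> E \<and> 0 < snd i \<and> I i \<subseteq> U \<and> g (fst i) - g (fst i - snd i) < p * snd i}"
  have cov1: "\<exists>i. i \<in> K1 \<and> x \<in> cball (fst i - snd i / 2) (snd i / 2) \<and> snd i / 2 < d"
    if xE: "x \<in> E" and d0: "0 < d" for x d
  proof -
    obtain e where e: "e > 0" "ball x e \<subseteq> U" using U(1) EU xE open_contains_ball by blast
    obtain h where h: "0 < h" "h < min e (2*d)" "g x - g (x - h) < p * h"
      using lsl[OF xE, of "min e (2*d)"] e d0 by auto
    have "I (x,h) \<subseteq> U" using e h unfolding I_def by (force simp: dist_real_def)
    then show ?thesis using h xE unfolding K1_def by (intro exI[of _ "(x,h)"]) (auto simp: cball_Icc_left)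
  qed
  obtain C1 where C1: "countable C1" "C1 \<subseteq> K1"
     "pairwise (\<lambda>i j. disjnt (cball (fst i - snd i / 2) (snd i / 2)) (cball (fst j - snd j / 2) (snd j / 2))) C1"
     "negligible(E - (\<Union>i \<in> C1. cball (fst i - snd i / 2) (snd i / 2)))"
  proof (rule Vitali_covering_theorem_cballs[of K1 "\<lambda>i. snd i / 2" E "\<lambda>i. fst i - snd i / 2"])
    show "\<And>i. i \<in> K1 \<Longrightarrow> 0 < snd i / 2" unfolding K1_def by auto
    show "\<And>x d. \<lbrakk>x \<in> E; 0 < d\<rbrakk> \<Longrightarrow> \<exists>i. i \<in> K1 \<and> x \<in> cball (fst i - snd i / 2) (snd i / 2) \<and> snd i / 2 < d"
      by (rule cov1)
  qed (rule that)
  have C1d: "pairwise (\<lambda>i j. disjnt (I i) (I j)) C1" and C1n: "negligible (E - (\<Union>i \<in> C1. I i))"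
    using C1(3,4) by (simp_all add: cball_Icc_left I_def)
  have C1K: "0 < snd i" "I i \<subseteq> U" "g (fst i) - g (fst i - snd i) < p * snd i" if "i \<in> C1" for i
    using C1(2) that unfolding K1_def by auto
  define S2 where "S2 = {y\<in>E. \<exists>i\<in>C1. fst i - snd i < y \<and> y < fst i}"
  define K2 where "K2 = {j. fst j \<in> E \<and> 0 < snd j \<and> (\<exists>i\<in>C1. fst i - snd i < fst j \<and> fst j + snd j < fst i)
                         \<and> q * snd j < g (fst j + snd j) - g (fst j)}"
  have cov2: "\<exists>j. j \<in> K2 \<and> y \<in> cball (fst j + snd j / 2) (snd j / 2) \<and> snd j / 2 < d"
    if yS: "y \<in> S2" and d0: "0 < d" for y d
  proof -
    obtain i where i: "i \<in> C1" "fst i - snd i < y" "y < fst i" "y \<in> E" using yS unfolding S2_def by auto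
    obtain k where k: "0 < k" "k < min (fst i - y) (2*d)" "q * k < g (y + k) - g y"
      using rsg[OF i(4), of "min (fst i - y) (2*d)"] i d0 by auto
    show ?thesis using i k unfolding K2_def by (intro exI[of _ "(y,k)"]) (auto simp: cball_Icc_right)
  qed
  obtain C2 where C2: "countable C2" "C2 \<subseteq> K2"
     "pairwise (\<lambda>i j. disjnt (cball (fst i + snd i / 2) (snd i / 2)) (cball (fst j + snd j / 2) (snd j / 2))) C2"
     "negligible(S2 - (\<Union>i \<in> C2. cball (fst i + snd i / 2) (snd i / 2)))"
  proof (rule Vitali_covering_theorem_cballs[of K2 "\<lambda>i. snd i / 2" S2 "\<lambda>i. fst i + snd i / 2"])
    show "\<And>i. i \<in> K2 \<Longrightarrow> 0 < snd i / 2" unfolding K2_def by auto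
    show "\<And>x d. \<lbrakk>x \<in> S2; 0 < d\<rbrakk> \<Longrightarrow> \<exists>i. i \<in> K2 \<and> x \<in> cball (fst i + snd i / 2) (snd i / 2) \<and> snd i / 2 < d"
      by (rule cov2)
  qed (rule that)
  have C2d: "pairwise (\<lambda>i j. disjnt (J i) (J j)) C2" and C2n: "negligible (S2 - (\<Union>i \<in> C2. J i))"
    using C2(3,4) by (simp_all add: cball_Icc_right J_def)
  have C2K: "0 < snd j" "\<exists>i\<in>C1. fst i - snd i < fst j \<and> fst j + snd j < fst i"
     "q * snd j < g (fst j + snd j) - g (fst j)" if "j \<in> C2" for j
    using C2(2) that unfolding K2_def by auto
  define f where "f = (\<lambda>j. SOME i. i\<in>C1 \<and> fst i - snd i < fst j \<and> fst j + snd j < fst i)"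
  have f: "f j \<in> C1" "fst (f j) - snd (f j) < fst j" "fst j + snd j < fst (f j)" if "j \<in> C2" for j
  proof -
    have "\<exists>i. i\<in>C1 \<and> fst i - snd i < fst j \<and> fst j + snd j < fst i" using C2K(2)[OF that] by blast
    from someI_ex[OF this] show "f j \<in> C1" "fst (f j) - snd (f j) < fst j" "fst j + snd j < fst (f j)"
      unfolding f_def by auto
  qed
  have funiq: "f j = i" if "j \<in> C2" "i \<in> C1" "fst i - snd i < fst j" "fst j + snd j < fst i" for i j
  proof (rule ccontr)
    assume "f j \<noteq> i"
    then have "disjnt (I (f j)) (I i)" using C1d f[OF that(1)] that(2) unfolding pairwise_def by blast
    moreover have "fst j \<in> I (f j)" "fst j \<in> I i" using f[OF that(1)] that C2K(1)[OF that(1)] unfolding I_def by auto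
    ultimately show False unfolding disjnt_def by blast
  qed
  have finbound: "(\<Sum>j\<in>G. snd j) \<le> p / q * measure lebesgue U" if G: "finite G" "G \<subseteq> C2" for G
  proof -
    have q0: "q > 0" using p by simp
    have fG: "f ` G \<subseteq> C1" using f(1) G by blast
    have "(\<Sum>j\<in>G. snd j) \<le> (\<Sum>j\<in>G. (g (fst j + snd j) - g (fst j)) / q)"
    proof (intro sum_mono)
      fix j assume "j \<in> G"
      then have "q * snd j < g (fst j + snd j) - g (fst j)" using C2K(3) G by auto
      then have "snd j * q \<le> g (fst j + snd j) - g (fst j)" by (simp add: mult.commute)
      then show "snd j \<le> (g (fst j + snd j) - g (fst j)) / q" by (simp add: pos_le_divide_eq q0)
    qed
    also have "\<dots> = (\<Sum>i\<in>f ` G. \<Sum>j\<in>{j\<in>G. f j = i}. (g (fst j + snd j) - g (fst j)) / q)"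
      using G by (intro sum.group[symmetric]) auto
    also have "\<dots> \<le> (\<Sum>i\<in>f ` G. (g (fst i) - g (fst i - snd i)) / q)"
    proof (intro sum_mono)
      fix i assume "i \<in> f ` G"
      then obtain j0 where j0: "j0 \<in> G" "i = f j0" by auto
      have iC1: "i \<in> C1" using f(1)[of j0] j0 G by auto
      have "(\<Sum>j\<in>{j\<in>G. f j = i}. g (fst j + snd j) - g (fst j)) \<le> g (fst i) - g (fst i - snd i)"
      proof (rule sub_intervals_sum[OF mono])
        show "finite {j \<in> G. f j = i}" using G by simp
        show "\<forall>j\<in>{j \<in> G. f j = i}. 0 < snd j" using G C2K(1) by auto
        show "\<forall>j\<in>{j \<in> G. f j = i}. fst i - snd i \<le> fst j \<and> fst j + snd j \<le> fst i"
        proof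
          fix j assume "j \<in> {j \<in> G. f j = i}"
          then have "j \<in> C2" "f j = i" using G by auto
          then show "fst i - snd i \<le> fst j \<and> fst j + snd j \<le> fst i"
            using f(2,3)[OF \<open>j \<in> C2\<close>] by auto
        qed
        show "fst i - snd i \<le> fst i" using C1K(1)[OF iC1] by simp
        show "pairwise (\<lambda>j j'. disjnt {fst j..fst j + snd j} {fst j'..fst j' + snd j'}) {j \<in> G. f j = i}"
          using C2d G unfolding J_def pairwise_def by blast
      qed
      then show "(\<Sum>j\<in>{j\<in>G. f j = i}. (g (fst j + snd j) - g (fst j)) / q) \<le> (g (fst i) - g (fst i - snd i)) / q"
        using q0 by (simp add: sum_divide_distrib[symmetric] divide_right_mono)
    qed
    also have "\<dots> \<le> (\<Sum>i\<in>f ` G. p / q * snd i)"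
    proof (intro sum_mono)
      fix i assume "i \<in> f ` G"
      then obtain j where "j \<in> G" "i = f j" by auto
      then have iC1: "i \<in> C1" using f(1)[of j] G by auto
      have "g (fst i) - g (fst i - snd i) \<le> p * snd i" using C1K(3)[OF iC1] by simp
      then have "(g (fst i) - g (fst i - snd i)) / q \<le> (p * snd i) / q" using q0 by (simp add: divide_right_mono)
      then show "(g (fst i) - g (fst i - snd i)) / q \<le> p / q * snd i" by simp
    qed
    also have "\<dots> = p / q * (\<Sum>i\<in>f ` G. snd i)" by (simp add: sum_distrib_left)
    also have "(\<Sum>i\<in>f ` G. snd i) = measure lebesgue (\<Union>i\<in>f ` G. I i)"
    proof -
      have "measure lebesgue (\<Union>i\<in>f ` G. I i) = (\<Sum>i\<in>f ` G. measure lebesgue (I i))"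
      proof (rule measure_negligible_finite_Union_image)
        show "finite (f ` G)" using G by simp
        show "I i \<in> lmeasurable" for i unfolding I_def by simp
        show "pairwise (\<lambda>x y. negligible (I x \<inter> I y)) (f ` G)"
          by (rule pairwise_mono[OF C1d _ fG]) (simp add: disjnt_def)
      qed
      also have "\<dots> = (\<Sum>i\<in>f ` G. snd i)"
      proof (intro sum.cong refl)
        fix i assume "i \<in> f ` G"
        then have "i \<in> C1" using fG by blast
        then show "measure lebesgue (I i) = snd i" using C1K(1)[of i] unfolding I_def by simp
      qed
      finally show ?thesis by simp
    qed
    also have "p / q * measure lebesgue (\<Union>i\<in>f ` G. I i) \<le> p / q * measure lebesgue U"
    proof (intro mult_left_mono measure_mono_fmeasurable)
      show "(\<Union>i\<in>f ` G. I i) \<subseteq> U" using C1K(2) fG by blast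
      show "(\<Union>i\<in>f ` G. I i) \<in> sets lebesgue" using G unfolding I_def by (intro sets.finite_UN) auto
      show "U \<in> lmeasurable" by (rule U(2))
      show "0 \<le> p / q" using p by simp
    qed
    finally show ?thesis by simp
  qed
  define W where "W = (\<Union>j\<in>C2. J j)"
  have JU: "J j \<subseteq> U" if "j \<in> C2" for j
    using f[OF that] C1K(2)[OF f(1)[OF that]] C2K(1)[OF that] unfolding I_def J_def by auto
  have Wsub: "W \<subseteq> U" using JU unfolding W_def by auto
  have Wmeas: "W \<in> lmeasurable"
  proof (rule fmeasurableI2[OF U(2) Wsub])
    show "W \<in> sets lebesgue" unfolding W_def J_def using C2(1)
      by (intro sets.countable_UN'') auto
  qed
  have Wle: "measure lebesgue W \<le> p / q * measure lebesgue U"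
  proof (rule field_le_epsilon)
    fix e :: real assume e: "0 < e"
    obtain D' where D': "D' \<subseteq> J ` C2" "finite D'" "measure lebesgue (\<Union>(J ` C2)) - e < measure lebesgue (\<Union>D')"
    proof (rule measure_countable_Union_approachable[of "J ` C2" e "measure lebesgue W"])
      show "countable (J ` C2)" using C2(1) by simp
      show "d \<in> lmeasurable" if "d \<in> J ` C2" for d using that unfolding J_def by auto
      show "measure lebesgue (\<Union>D') \<le> measure lebesgue W" if "D' \<subseteq> J ` C2" "finite D'" for D'
      proof (rule measure_mono_fmeasurable[OF _ _ Wmeas])
        show "\<Union>D' \<subseteq> W" using that unfolding W_def by auto
        have "D' \<subseteq> sets lebesgue" using that unfolding J_def by auto
        then show "\<Union>D' \<in> sets lebesgue" using that(2) by (intro sets.finite_Union) auto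
      qed
    qed (use e in auto)
    obtain G where G: "G \<subseteq> C2" "finite G" "D' = J ` G" using D' by (meson finite_subset_image)
    have "measure lebesgue (\<Union>D') = (\<Sum>j\<in>G. measure lebesgue (J j))"
      unfolding G(3)
    proof (rule measure_negligible_finite_Union_image)
      show "finite G" by fact
      show "J i \<in> lmeasurable" for i unfolding J_def by simp
      show "pairwise (\<lambda>x y. negligible (J x \<inter> J y)) G"
        using C2d G unfolding pairwise_def disjnt_def by (metis negligible_empty subsetD)
    qed
    also have "\<dots> = (\<Sum>j\<in>G. snd j)"
    proof (intro sum.cong refl)
      fix j assume "j \<in> G"
      then have "j \<in> C2" using G by blast
      then show "measure lebesgue (J j) = snd j" using C2K(1)[of j] unfolding J_def by simp
    qed
    also have "\<dots> \<le> p / q * measure lebesgue U" using finbound G by simp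
    finally show "measure lebesgue W \<le> p / q * measure lebesgue U + e" using D' unfolding W_def by simp
  qed
  define Nn where "Nn = (S2 - W) \<union> (E - (\<Union>i\<in>C1. I i)) \<union> (\<Union>i\<in>C1. {fst i - snd i, fst i})"
  have "negligible (\<Union>i\<in>C1. {fst i - snd i, fst i})"
    using C1(1) by (intro negligible_countable_Union) auto
  then have Nneg: "negligible Nn" unfolding Nn_def W_def using C2n C1n by auto
  have ET: "E \<subseteq> W \<union> Nn"
  proof
    fix y assume y: "y \<in> E"
    show "y \<in> W \<union> Nn"
    proof (cases "y \<in> (\<Union>i\<in>C1. I i)")
      case True
      then obtain i where i: "i \<in> C1" "y \<in> I i" by auto
      show ?thesis
      proof (cases "y = fst i - snd i \<or> y = fst i")
        case True then show ?thesis using i unfolding Nn_def by auto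
      next
        case False
        then have "y \<in> S2" using i y unfolding S2_def I_def by force
        then show ?thesis unfolding Nn_def by auto
      qed
    qed (use y in \<open>auto simp: Nn_def\<close>)
  qed
  have sd: "negligible (sym_diff W (W \<union> Nn))"
    by (rule negligible_subset[OF Nneg]) auto
  have "W \<union> Nn \<in> lmeasurable" by (rule lmeasurable_negligible_symdiff[OF Wmeas sd])
  moreover have "measure lebesgue (W \<union> Nn) = measure lebesgue W"
    by (rule measure_negligible_symdiff[OF Wmeas sd])
  ultimately show ?thesis using ET Wle by (intro exI[of _ "W \<union> Nn"]) auto
qed

lemma K:
  fixes g :: "real \<Rightarrow> real" and E :: "real set"
  assumes mono: "mono g" and pq: "p < q" and bE: "bounded E"
    and lsl: "\<And>x \<delta>. x \<in> E \<Longrightarrow> 0 < \<delta> \<Longrightarrow> \<exists>h. 0 < h \<and> h < \<delta> \<and> g x - g (x - h) < p * h"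
    and rsg: "\<And>x \<delta>. x \<in> E \<Longrightarrow> 0 < \<delta> \<Longrightarrow> \<exists>h. 0 < h \<and> h < \<delta> \<and> q * h < g (x + h) - g x"
  shows "negligible E"
proof (cases "p > 0")
  case False
  have "E = {}"
  proof (rule ccontr)
    assume "E \<noteq> {}"
    then obtain x where x: "x \<in> E" by auto
    obtain h where h: "0 < h" "g x - g (x - h) < p * h" using lsl[OF x, of 1] by auto
    have "g (x - h) \<le> g x" using mono h(1) by (simp add: monoD)
    moreover have "p * h \<le> 0" using False h(1) by (simp add: mult_nonpos_nonneg)
    ultimately show False using h(2) by simp
  qed
  then show ?thesis by simp
next
  case True
  define M where "M = {measure lebesgue U | U. open U \<and> E \<subseteq> U \<and> U \<in> lmeasurable}"
  obtain R where "E \<subseteq> ball 0 R" using bE bounded_subset_ballD by blast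
  moreover have "open (ball (0::real) R)" "ball (0::real) R \<in> lmeasurable" by auto
  ultimately have "measure lebesgue (ball (0::real) R) \<in> M" unfolding M_def
    by (intro CollectI exI[of _ "ball (0::real) R"] conjI refl) auto
  then have Mne: "M \<noteq> {}" by auto
  have M0: "0 \<le> m" if "m \<in> M" for m using that unfolding M_def by auto
  have bdd: "bdd_below M" using M0 by (meson bdd_below.I)
  define s where "s = Inf M"
  have s0: "0 \<le> s" unfolding s_def using Mne M0 by (intro cInf_greatest) auto
  have q0: "0 < q" using True pq by simp
  have pq1: "p / q < 1" "0 < p / q" using True pq q0 by (simp_all add: divide_less_eq)
  have key: "s \<le> p / q * (s + e) + e" if e: "0 < e" for e
  proof -
    obtain m where m: "m \<in> M" "m < s + e" using cInf_lessD[OF Mne, of "s + e"] e unfolding s_def by auto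
    then obtain U where U: "open U" "E \<subseteq> U" "U \<in> lmeasurable" "m = measure lebesgue U"
      unfolding M_def by auto
    obtain T where T: "E \<subseteq> T" "T \<in> lmeasurable" "measure lebesgue T \<le> p / q * measure lebesgue U"
      using K1[OF mono True pq U(2) U(1) U(3) lsl rsg] by blast
    obtain T' where T': "open T'" "T \<subseteq> T'" "T' - T \<in> lmeasurable" "emeasure lebesgue (T' - T) < ennreal e"
      using sets_lebesgue_outer_open[of T e] T(2) e by auto
    have T'eq: "T' = T \<union> (T' - T)" using T'(2) by auto
    have T'm: "T' \<in> lmeasurable" using T(2) T'(3) T'eq by (metis fmeasurable.Un)
    have me: "measure lebesgue (T' - T) < e"
      using T'(3,4) e by (simp add: emeasure_eq_measure2 ennreal_less_iff)
    have "measure lebesgue T' \<le> measure lebesgue T + measure lebesgue (T' - T)"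
      using T(2) T'(3) T'eq by (metis fmeasurableD measure_Un_le)
    also have "\<dots> \<le> p / q * m + e" using T(3) me U(4) by simp
    also have "\<dots> \<le> p / q * (s + e) + e" using m(2) pq1 by (intro add_right_mono mult_left_mono) auto
    finally have "measure lebesgue T' \<le> p / q * (s + e) + e" .
    moreover have "s \<le> measure lebesgue T'"
    proof -
      have "measure lebesgue T' \<in> M" unfolding M_def using T'm T'(1) T'(2) T(1)
        by (intro CollectI exI[of _ T'] conjI refl) auto
      then show ?thesis unfolding s_def using bdd by (rule cInf_lower)
    qed
    ultimately show ?thesis by simp
  qed
  have "s \<le> p / q * s"
  proof (rule field_le_epsilon)
    fix e :: real assume e: "0 < e"
    have "s \<le> p / q * (s + e / 2) + e / 2" using key[of "e/2"] e by simp
    also have "\<dots> = p / q * s + p / q * (e / 2) + e / 2" by (simp add: algebra_simps)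
    also have "\<dots> \<le> p / q * s + e"
    proof -
      have "p / q * (e / 2) \<le> e / 2" using pq1 e by (intro mult_left_le_one_le) auto
      then show ?thesis by linarith
    qed
    finally show "s \<le> p / q * s + e" .
  qed
  then have "s = 0" using s0 pq1
    by (metis mult_less_cancel_right2 not_le order_antisym)
  show ?thesis unfolding negligible_outer
  proof (intro allI impI)
    fix e :: real assume "0 < e"
    then obtain m where "m \<in> M" "m < e" using cInf_lessD[OF Mne, of e] \<open>s = 0\<close> unfolding s_def by auto
    then show "\<exists>T. E \<subseteq> T \<and> T \<in> lmeasurable \<and> measure lebesgue T < e" unfolding M_def by auto
  qed
qed

lemma osc_diff:
  fixes g :: "real \<Rightarrow> real" and x M :: real
  assumes bnd: "\<And>k. k \<noteq> 0 \<Longrightarrow> \<bar>(g (x + k) - g x) / k\<bar> \<le> M"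
   and NE1: "\<And>p q. p \<in> \<rat> \<Longrightarrow> q \<in> \<rat> \<Longrightarrow> p < q \<Longrightarrow>
      \<not> ((\<forall>\<delta>>0. \<exists>h. 0 < h \<and> h < \<delta> \<and> g x - g (x - h) < p * h) \<and> (\<forall>\<delta>>0. \<exists>h. 0 < h \<and> h < \<delta> \<and> q * h < g (x + h) - g x))"
   and NE2: "\<And>p q. p \<in> \<rat> \<Longrightarrow> q \<in> \<rat> \<Longrightarrow> p < q \<Longrightarrow>
      \<not> ((\<forall>\<delta>>0. \<exists>h. 0 < h \<and> h < \<delta> \<and> g (x + h) - g x < p * h) \<and> (\<forall>\<delta>>0. \<exists>h. 0 < h \<and> h < \<delta> \<and> q * h < g x - g (x - h)))"
  shows "g differentiable at x"
proof -
  define S where "S = (\<lambda>k. (g (x + k) - g x) / k)"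
  define FR where "FR = (\<lambda>P. \<forall>\<delta>>0. \<exists>h. 0 < h \<and> h < \<delta> \<and> P (S h))"
  define FL where "FL = (\<lambda>P. \<forall>\<delta>>0. \<exists>h. 0 < h \<and> h < \<delta> \<and> P (S (- h)))"
  have Sneg: "S (- h) = (g x - g (x - h)) / h" for h unfolding S_def by (simp add: divide_simps)
  have c1: "g x - g (x - h) < p * h \<longleftrightarrow> S (- h) < p" if "0 < h" for h p
    using that by (simp add: Sneg pos_divide_less_eq mult.commute)
  have c2: "q * h < g (x + h) - g x \<longleftrightarrow> q < S h" if "0 < h" for h q
    using that by (simp add: S_def pos_less_divide_eq mult.commute)
  have c3: "g (x + h) - g x < p * h \<longleftrightarrow> S h < p" if "0 < h" for h p
    using that by (simp add: S_def pos_divide_less_eq mult.commute)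
  have c4: "q * h < g x - g (x - h) \<longleftrightarrow> q < S (- h)" if "0 < h" for h q
    using that by (simp add: Sneg pos_less_divide_eq mult.commute)
  have tr: "\<forall>\<delta>>0. \<exists>h. 0 < h \<and> h < \<delta> \<and> Q h"
    if "\<forall>\<delta>>0. \<exists>h. 0 < h \<and> h < \<delta> \<and> P h" "\<And>h. 0 < h \<Longrightarrow> P h \<Longrightarrow> Q h" for P Q :: "real \<Rightarrow> bool"
    using that by meson
  have N1: "\<not> (FL (\<lambda>s. s < p) \<and> FR (\<lambda>s. q < s))" if "p \<in> \<rat>" "q \<in> \<rat>" "p < q" for p q
  proof
    assume a: "FL (\<lambda>s. s < p) \<and> FR (\<lambda>s. q < s)"
    have "(\<forall>\<delta>>0. \<exists>h. 0 < h \<and> h < \<delta> \<and> g x - g (x - h) < p * h)"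
    proof -
      have "FL (\<lambda>s. s < p)" using a by blast
      then have "\<forall>\<delta>>0. \<exists>h. 0 < h \<and> h < \<delta> \<and> S (- h) < p" unfolding FL_def by simp
      then show ?thesis by (rule tr) (simp add: c1)
    qed
    moreover have "(\<forall>\<delta>>0. \<exists>h. 0 < h \<and> h < \<delta> \<and> q * h < g (x + h) - g x)"
    proof -
      have "FR (\<lambda>s. q < s)" using a by blast
      then have "\<forall>\<delta>>0. \<exists>h. 0 < h \<and> h < \<delta> \<and> q < S h" unfolding FR_def by simp
      then show ?thesis by (rule tr) (simp add: c2)
    qed
    ultimately show False using NE1[OF that] by blast
  qed
  have N2: "\<not> (FR (\<lambda>s. s < p) \<and> FL (\<lambda>s. q < s))" if "p \<in> \<rat>" "q \<in> \<rat>" "p < q" for p q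
  proof
    assume a: "FR (\<lambda>s. s < p) \<and> FL (\<lambda>s. q < s)"
    have "(\<forall>\<delta>>0. \<exists>h. 0 < h \<and> h < \<delta> \<and> g (x + h) - g x < p * h)"
    proof -
      have "FR (\<lambda>s. s < p)" using a by blast
      then have "\<forall>\<delta>>0. \<exists>h. 0 < h \<and> h < \<delta> \<and> S h < p" unfolding FR_def by simp
      then show ?thesis by (rule tr) (simp add: c3)
    qed
    moreover have "(\<forall>\<delta>>0. \<exists>h. 0 < h \<and> h < \<delta> \<and> q * h < g x - g (x - h))"
    proof -
      have "FL (\<lambda>s. q < s)" using a by blast
      then have "\<forall>\<delta>>0. \<exists>h. 0 < h \<and> h < \<delta> \<and> q < S (- h)" unfolding FL_def by simp
      then show ?thesis by (rule tr) (simp add: c4)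
    qed
    ultimately show False using NE2[OF that] by blast
  qed
  have notFR: "\<exists>\<delta>>0. \<forall>h. 0 < h \<and> h < \<delta> \<longrightarrow> \<not> P (S h)" if "\<not> FR P" for P
    using that unfolding FR_def by blast
  have notFL: "\<exists>\<delta>>0. \<forall>h. 0 < h \<and> h < \<delta> \<longrightarrow> \<not> P (S (- h))" if "\<not> FL P" for P
    using that unfolding FL_def by blast
  have evR: "FR P" if ex: "\<exists>\<delta>>0. \<forall>h. 0 < h \<and> h < \<delta> \<longrightarrow> P (S h)" for P
  proof -
    obtain \<delta> where d: "\<delta> > 0" "\<forall>h. 0 < h \<and> h < \<delta> \<longrightarrow> P (S h)" using ex by blast
    show ?thesis unfolding FR_def
    proof (intro allI impI)
      fix e :: real assume "e > 0"
      then show "\<exists>h>0. h < e \<and> P (S h)" using d by (intro exI[of _ "min e \<delta> / 2"]) auto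
    qed
  qed
  have evL: "FL P" if ex: "\<exists>\<delta>>0. \<forall>h. 0 < h \<and> h < \<delta> \<longrightarrow> P (S (- h))" for P
  proof -
    obtain \<delta> where d: "\<delta> > 0" "\<forall>h. 0 < h \<and> h < \<delta> \<longrightarrow> P (S (- h))" using ex by blast
    show ?thesis unfolding FL_def
    proof (intro allI impI)
      fix e :: real assume "e > 0"
      then show "\<exists>h>0. h < e \<and> P (S (- h))" using d by (intro exI[of _ "min e \<delta> / 2"]) auto
    qed
  qed
  have split: "FR P \<or> FL P" if "\<not> eventually (\<lambda>k. \<not> P (S k)) (at 0)" for P
  proof (rule ccontr)
    assume "\<not> (FR P \<or> FL P)"
    then have "\<not> FR P" "\<not> FL P" by auto
    obtain d1 where d1: "d1 > 0" "\<forall>h. 0 < h \<and> h < d1 \<longrightarrow> \<not> P (S h)"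
      using notFR[OF \<open>\<not> FR P\<close>] by blast
    obtain d2 where d2: "d2 > 0" "\<forall>h. 0 < h \<and> h < d2 \<longrightarrow> \<not> P (S (- h))"
      using notFL[OF \<open>\<not> FL P\<close>] by blast
    note d = d1 d2
    have "eventually (\<lambda>k. \<not> P (S k)) (at 0)"
      unfolding eventually_at
    proof (intro exI[of _ "min d1 d2"] conjI ballI impI)
      show "0 < min d1 d2" using d by simp
      fix k :: real assume k: "k \<in> UNIV" "k \<noteq> 0 \<and> dist k 0 < min d1 d2"
      show "\<not> P (S k)"
      proof (cases "k > 0")
        case True then show ?thesis using d(2) k by auto
      next
        case False
        then have "0 < - k" "- k < d2" using k by auto
        then show ?thesis using d(4)[rule_format, of "- k"] by simp
      qed
    qed
    then show False using that by blast
  qed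
  have noosc: "\<not> (\<not> eventually (\<lambda>k. \<not> S k < p) (at 0) \<and> \<not> eventually (\<lambda>k. \<not> q < S k) (at 0))"
    if pq: "p \<in> \<rat>" "q \<in> \<rat>" "p < q" for p q
  proof
    assume a: "\<not> eventually (\<lambda>k. \<not> S k < p) (at 0) \<and> \<not> eventually (\<lambda>k. \<not> q < S k) (at 0)"
    have A: "FR (\<lambda>s. s < p) \<or> FL (\<lambda>s. s < p)" using split[of "\<lambda>s. s < p"] a by blast
    have B: "FR (\<lambda>s. q < s) \<or> FL (\<lambda>s. q < s)" using split[of "\<lambda>s. q < s"] a by blast
    obtain m where m: "m \<in> \<rat>" "p < m" "m < q" using Rats_dense_in_real[OF pq(3)] by blast
    obtain m' where m': "m' \<in> \<rat>" "m < m'" "m' < q" using Rats_dense_in_real[OF m(3)] by blast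
    show False
    proof (cases "FL (\<lambda>s. s < p)")
      case L: True
      show ?thesis
      proof (cases "FR (\<lambda>s. q < s)")
        case True then show ?thesis using N1[OF pq] L by blast
      next
        case False
        then have FLq: "FL (\<lambda>s. q < s)" using B by blast
        show ?thesis
        proof (cases "FR (\<lambda>s. m < s)")
          case True then show ?thesis using N1[OF pq(1) m(1) m(2)] L by blast
        next
          case False
          then obtain \<delta> where "\<delta> > 0" "\<forall>h. 0 < h \<and> h < \<delta> \<longrightarrow> \<not> m < S h" using notFR by blast
          then have "FR (\<lambda>s. s < m')" using m' by (intro evR) (auto intro!: exI[of _ \<delta>])
          then show ?thesis using N2[OF m'(1) pq(2) m'(3)] FLq by blast
        qed
      qed
    next
      case NL: False
      then have R: "FR (\<lambda>s. s < p)" using A by blast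
      show ?thesis
      proof (cases "FL (\<lambda>s. q < s)")
        case True then show ?thesis using N2[OF pq] R by blast
      next
        case False
        then have FRq: "FR (\<lambda>s. q < s)" using B by blast
        show ?thesis
        proof (cases "FL (\<lambda>s. m < s)")
          case True then show ?thesis using N2[OF pq(1) m(1) m(2)] R by blast
        next
          case False
          then obtain \<delta> where "\<delta> > 0" "\<forall>h. 0 < h \<and> h < \<delta> \<longrightarrow> \<not> m < S (- h)" using notFL by blast
          then have "FL (\<lambda>s. s < m')" using m' by (intro evL) (auto intro!: exI[of _ \<delta>])
          then show ?thesis using N1[OF m'(1) pq(2) m'(3)] FRq by blast
        qed
      qed
    qed
  qed
  define l where "l = Liminf (at (0::real)) (\<lambda>k. ereal (S k))"
  define u where "u = Limsup (at (0::real)) (\<lambda>k. ereal (S k))"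
  have lu: "l \<le> u" unfolding l_def u_def by (rule Liminf_le_Limsup) simp
  have evb: "eventually (\<lambda>k. \<bar>S k\<bar> \<le> M) (at 0)"
    unfolding eventually_at using bnd unfolding S_def by (intro exI[of _ 1]) auto
  have lM: "- ereal M \<le> l" unfolding l_def le_Liminf_iff
  proof (intro allI impI)
    fix y assume "y < - ereal M"
    then have y: "y < ereal (- M)" by simp
    show "\<forall>\<^sub>F k in at 0. y < ereal (S k)"
    proof (rule eventually_mono[OF evb])
      fix k assume "\<bar>S k\<bar> \<le> M"
      then have "ereal (- M) \<le> ereal (S k)" by simp
      with y show "y < ereal (S k)" by (rule less_le_trans)
    qed
  qed
  have uM: "u \<le> ereal M" unfolding u_def Limsup_le_iff
  proof (intro allI impI)
    fix y assume "y > ereal M"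
    then have y: "ereal M < y" by simp
    show "\<forall>\<^sub>F k in at 0. ereal (S k) < y"
    proof (rule eventually_mono[OF evb])
      fix k assume "\<bar>S k\<bar> \<le> M"
      then have "ereal (S k) \<le> ereal M" by simp
      then show "ereal (S k) < y" using y by (rule le_less_trans)
    qed
  qed
  have "l = u"
  proof (rule ccontr)
    assume "l \<noteq> u"
    then have "l < u" using lu by simp
    then obtain z1 where z1: "l < ereal z1" "ereal z1 < u" using ereal_dense2 by blast
    then obtain z2 where z2: "ereal z1 < ereal z2" "ereal z2 < u" using ereal_dense2 by blast
    then have "z1 < z2" by simp
    then obtain p where p: "p \<in> \<rat>" "z1 < p" "p < z2" using Rats_dense_in_real by blast
    then obtain q where q: "q \<in> \<rat>" "p < q" "q < z2" using Rats_dense_in_real by blast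
    have A1: "\<not> eventually (\<lambda>k. \<not> S k < p) (at 0)"
    proof
      assume ev: "eventually (\<lambda>k. \<not> S k < p) (at 0)"
      have "ereal p \<le> l" unfolding l_def le_Liminf_iff
        by (intro allI impI, rule eventually_mono[OF ev]) (auto simp: not_less intro: less_le_trans[where y="ereal p"])
      then have "ereal p < ereal z1" using z1(1) by (rule le_less_trans)
      then show False using p(2) by simp
    qed
    have A2: "\<not> eventually (\<lambda>k. \<not> q < S k) (at 0)"
    proof
      assume ev: "eventually (\<lambda>k. \<not> q < S k) (at 0)"
      have "u \<le> ereal q" unfolding u_def Limsup_le_iff
        by (intro allI impI, rule eventually_mono[OF ev]) (auto simp: not_less intro: le_less_trans[where y="ereal q"])
      with z2(2) have "ereal z2 < ereal q" by (rule less_le_trans)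
      then show False using q(3) by simp
    qed
    show False using noosc[OF p(1) q(1) q(2)] A1 A2 by simp
  qed
  have lim: "((\<lambda>k. ereal (S k)) \<longlongrightarrow> l) (at 0)"
  proof (rule Liminf_eq_Limsup)
    show "at (0::real) \<noteq> bot" by simp
    show "Liminf (at 0) (\<lambda>k. ereal (S k)) = l" unfolding l_def ..
    show "Limsup (at 0) (\<lambda>k. ereal (S k)) = l" unfolding \<open>l = u\<close> u_def ..
  qed
  have lM2: "l \<le> ereal M" using uM \<open>l = u\<close> by simp
  obtain D where D: "l = ereal D"
  proof (cases l)
    case (real r) then show ?thesis using that by blast
  next
    case PInf then show ?thesis using lM2 by simp
  next
    case MInf then show ?thesis using lM by simp
  qed
  have "(S \<longlongrightarrow> D) (at 0)" using lim unfolding D by (simp add: lim_ereal)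
  then have "(g has_real_derivative D) (at x)" unfolding DERIV_def S_def by simp
  then show ?thesis using real_differentiable_def by blast
qed

lemma lipschitz_ae_differentiable:
  fixes f :: "real \<Rightarrow> real"
  assumes lip: "L-lipschitz_on UNIV f"
  shows "negligible {x. \<not> f differentiable at x}"
proof -
  have L0: "0 \<le> L" and fl: "\<And>x y. \<bar>f x - f y\<bar> \<le> L * \<bar>x - y\<bar>"
    using lip unfolding lipschitz_on_def dist_real_def by auto
  define g where "g = (\<lambda>x. f x + L * x)"
  have mono: "mono g" unfolding mono_def g_def
  proof (intro allI impI)
    fix x y :: real assume "x \<le> y"
    have "f x - f y \<le> L * (y - x)" using fl[of x y] \<open>x \<le> y\<close> by (simp add: abs_le_iff)
    then show "f x + L * x \<le> f y + L * y" by (simp add: algebra_simps)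
  qed
  have bnd: "\<bar>(g (x + k) - g x) / k\<bar> \<le> 2 * L" if "k \<noteq> 0" for x k
  proof -
    have e: "g (x + k) - g x = (f (x + k) - f x) + L * k" unfolding g_def by (simp add: algebra_simps)
    have "\<bar>(f (x + k) - f x) + L * k\<bar> \<le> \<bar>f (x + k) - f x\<bar> + \<bar>L * k\<bar>" by (rule abs_triangle_ineq)
    then have "\<bar>g (x + k) - g x\<bar> \<le> \<bar>f (x + k) - f x\<bar> + L * \<bar>k\<bar>" unfolding e using L0 by (simp add: abs_mult)
    also have "\<dots> \<le> 2 * L * \<bar>k\<bar>" using fl[of "x + k" x] by simp
    finally show ?thesis using that by (simp add: abs_divide divide_le_eq)
  qed
  define E1 where "E1 = (\<lambda>p q. {x. (\<forall>\<delta>>0. \<exists>h. 0 < h \<and> h < \<delta> \<and> g x - g (x - h) < p * h) \<and> (\<forall>\<delta>>0. \<exists>h. 0 < h \<and> h < \<delta> \<and> q * h < g (x + h) - g x)})"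
  define E2 where "E2 = (\<lambda>p q. {x. (\<forall>\<delta>>0. \<exists>h. 0 < h \<and> h < \<delta> \<and> g (x + h) - g x < p * h) \<and> (\<forall>\<delta>>0. \<exists>h. 0 < h \<and> h < \<delta> \<and> q * h < g x - g (x - h))})"
  have n1: "negligible (E1 p q \<inter> ball 0 n)" if "p < q" for p q n
  proof (rule K[OF mono that])
    show "bounded (E1 p q \<inter> ball 0 n)" by (rule bounded_Int) simp
    fix x \<delta> assume "x \<in> E1 p q \<inter> ball 0 n" "0 < (\<delta>::real)"
    then show "\<exists>h>0. h < \<delta> \<and> g x - g (x - h) < p * h" "\<exists>h>0. h < \<delta> \<and> q * h < g (x + h) - g x"
      unfolding E1_def by blast+
  qed
  have n2: "negligible (E2 p q \<inter> ball 0 n)" if "p < q" for p q n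
  proof -
    define g' where "g' = (\<lambda>x. - g (- x))"
    have mono': "mono g'" using mono unfolding g'_def mono_def by auto
    have "negligible (uminus ` (E2 p q \<inter> ball 0 n))"
    proof (rule K[OF mono' that])
      have "uminus ` (E2 p q \<inter> ball 0 n) \<subseteq> ball 0 n" by (auto simp: dist_real_def)
      then show "bounded (uminus ` (E2 p q \<inter> ball 0 n))" using bounded_ball bounded_subset by blast
      fix y \<delta> assume y: "y \<in> uminus ` (E2 p q \<inter> ball 0 n)" and d: "0 < (\<delta>::real)"
      then obtain x where x: "x \<in> E2 p q" "y = - x" by auto
      obtain h where h: "0 < h" "h < \<delta>" "g (x + h) - g x < p * h" using x(1) d unfolding E2_def by blast
      then show "\<exists>h>0. h < \<delta> \<and> g' y - g' (y - h) < p * h" unfolding g'_def x(2) by (intro exI[of _ h]) (simp add: algebra_simps)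
      obtain h where h: "0 < h" "h < \<delta>" "q * h < g x - g (x - h)" using x(1) d unfolding E2_def by blast
      then show "\<exists>h>0. h < \<delta> \<and> q * h < g' (y + h) - g' y" unfolding g'_def x(2) by (intro exI[of _ h]) (simp add: algebra_simps)
    qed
    then have "negligible (uminus ` (uminus ` (E2 p q \<inter> ball 0 n)))"
      by (rule negligible_differentiable_image_negligible[OF order_refl]) (auto intro!: derivative_intros)
    then show ?thesis by (simp add: image_image)
  qed
  define F where "F = (\<lambda>(p, q, n::nat). if p < q then (E1 p q \<union> E2 p q) \<inter> ball 0 (real n) else {})"
  have negU: "negligible (\<Union>(F ` (\<rat> \<times> \<rat> \<times> UNIV)))"
  proof (rule negligible_countable_Union)
    show "countable (F ` (\<rat> \<times> \<rat> \<times> UNIV))" by (intro countable_image countable_SIGMA countable_rat) auto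
    show "negligible S" if Sin: "S \<in> F ` (\<rat> \<times> \<rat> \<times> UNIV)" for S
    proof -
      obtain p q n where S: "S = F (p, q, n)" using Sin by auto
      show ?thesis
      proof (cases "p < q")
        case True
        then have "S = (E1 p q \<inter> ball 0 (real n)) \<union> (E2 p q \<inter> ball 0 (real n))" unfolding S F_def by auto
        then show ?thesis using n1[OF True] n2[OF True] by simp
      qed (simp add: S F_def)
    qed
  qed
  have "{x. \<not> f differentiable at x} \<subseteq> \<Union>(F ` (\<rat> \<times> \<rat> \<times> UNIV))"
  proof
    fix x assume "x \<in> {x. \<not> f differentiable at x}"
    then have nd: "\<not> f differentiable at x" by simp
    have "\<not> g differentiable at x"
    proof
      assume "g differentiable at x"
      then have "(\<lambda>x. g x - L * x) differentiable at x" by (intro derivative_intros) auto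
      then show False using nd unfolding g_def by simp
    qed
    have "\<exists>p q. p \<in> \<rat> \<and> q \<in> \<rat> \<and> p < q \<and> (x \<in> E1 p q \<or> x \<in> E2 p q)"
    proof (rule ccontr)
      assume a: "\<not> ?thesis"
      have "g differentiable at x"
      proof (rule osc_diff[of g x "2 * L"])
        show "\<And>k. k \<noteq> 0 \<Longrightarrow> \<bar>(g (x + k) - g x) / k\<bar> \<le> 2 * L" by (rule bnd)
        fix p q :: real assume "p \<in> \<rat>" "q \<in> \<rat>" "p < q"
        then have "x \<notin> E1 p q" "x \<notin> E2 p q" using a by auto
        then show "\<not> ((\<forall>\<delta>>0. \<exists>h. 0 < h \<and> h < \<delta> \<and> g x - g (x - h) < p * h) \<and> (\<forall>\<delta>>0. \<exists>h. 0 < h \<and> h < \<delta> \<and> q * h < g (x + h) - g x))"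
          "\<not> ((\<forall>\<delta>>0. \<exists>h. 0 < h \<and> h < \<delta> \<and> g (x + h) - g x < p * h) \<and> (\<forall>\<delta>>0. \<exists>h. 0 < h \<and> h < \<delta> \<and> q * h < g x - g (x - h)))"
          unfolding E1_def E2_def by simp_all
      qed
      then show False using \<open>\<not> g differentiable at x\<close> by simp
    qed
    then obtain p q where pq: "p \<in> \<rat>" "q \<in> \<rat>" "p < q" "x \<in> E1 p q \<or> x \<in> E2 p q"
      by blast
    obtain n :: nat where "\<bar>x\<bar> < real n" using reals_Archimedean2 by blast
    then have "x \<in> F (p, q, n)" using pq unfolding F_def by auto
    then show "x \<in> \<Union>(F ` (\<rat> \<times> \<rat> \<times> UNIV))" using pq by blast
  qed
  then show ?thesis using negU negligible_subset by blast
qed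

lemma lip_bounds:
  fixes f :: "real \<Rightarrow> real"
  assumes lip: "L-lipschitz_on UNIV f"
  shows "0 \<le> L" "\<And>x y. \<bar>f x - f y\<bar> \<le> L * \<bar>x - y\<bar>" "continuous_on UNIV f"
  using lip unfolding lipschitz_on_def dist_real_def apply auto
  using lip lipschitz_on_continuous_on by blast

lemma avg_lim:
  fixes f :: "real \<Rightarrow> real"
  assumes lip: "L-lipschitz_on UNIV f"
  shows "(\<lambda>n. integral {c..c + 1 / real (Suc n)} f / (1 / real (Suc n))) \<longlonglongrightarrow> f c"
proof (rule LIM_zero_cancel)
  note lb = lip_bounds[OF lip]
  define H where "H = (\<lambda>n. 1 / real (Suc n))"
  have H0: "0 < H n" for n unfolding H_def by simp
  have est: "\<bar>integral {c..c + H n} f / H n - f c\<bar> \<le> L * H n" for n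
  proof -
    have cont: "continuous_on {c..c + H n} f" using lb(3) continuous_on_subset by blast
    have "integral {c..c + H n} (\<lambda>x. f x - f c) = integral {c..c + H n} f - integral {c..c + H n} (\<lambda>x. f c)"
      by (rule integral_diff[OF integrable_continuous_real[OF cont] integrable_const_ivl])
    also have "integral {c..c + H n} (\<lambda>x. f c) = H n * f c" using H0[of n] by simp
    finally have e: "integral {c..c + H n} f = integral {c..c + H n} (\<lambda>x. f x - f c) + H n * f c" by simp
    have "norm (integral {c..c + H n} (\<lambda>x. f x - f c)) \<le> (L * H n) * ((c + H n) - c)"
    proof (rule integral_bound)
      show "c \<le> c + H n" using H0[of n] by simp
      show "continuous_on {c..c + H n} (\<lambda>x. f x - f c)" using cont by (intro continuous_intros)
      fix t assume "t \<in> {c..c + H n}"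
      have t1: "\<bar>f t - f c\<bar> \<le> L * \<bar>t - c\<bar>" by (rule lb(2))
      have "\<bar>t - c\<bar> \<le> H n" using \<open>t \<in> {c..c + H n}\<close> by auto
      then have "L * \<bar>t - c\<bar> \<le> L * H n" using lb(1) by (rule mult_left_mono)
      with t1 show "norm (f t - f c) \<le> L * H n" by simp
    qed
    then have "\<bar>integral {c..c + H n} (\<lambda>x. f x - f c)\<bar> \<le> L * H n * H n" by simp
    then have "\<bar>integral {c..c + H n} (\<lambda>x. f x - f c) / H n\<bar> \<le> L * H n"
      using H0[of n] by (simp add: abs_divide divide_le_eq)
    moreover have "integral {c..c + H n} f / H n - f c = integral {c..c + H n} (\<lambda>x. f x - f c) / H n"
      using H0[of n] unfolding e by (simp add: add_divide_distrib)
    ultimately show ?thesis by simp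
  qed
  have "H \<longlonglongrightarrow> 0"
    unfolding H_def using LIMSEQ_inverse_real_of_nat by (simp add: inverse_eq_divide)
  then have lim: "(\<lambda>n. L * H n) \<longlonglongrightarrow> 0" by (rule tendsto_mult_right_zero)
  have b: "\<forall>n. norm (integral {c..c + 1 / real (Suc n)} f / (1 / real (Suc n)) - f c) \<le> L * H n"
    using est unfolding H_def by simp
  show "(\<lambda>n. integral {c..c + 1 / real (Suc n)} f / (1 / real (Suc n)) - f c) \<longlonglongrightarrow> 0"
    using Lim_null_comparison[OF always_eventually[OF b] lim] .
qed

lemma lipschitz_ftc:
  fixes f :: "real \<Rightarrow> real"
  assumes lip: "L-lipschitz_on UNIV f" and ab: "a \<le> b"
  shows "(deriv f has_integral (f b - f a)) {a..b}"
proof -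
  note lb = lip_bounds[OF lip]
  define N where "N = {x. \<not> f differentiable at x}"
  have Nneg: "negligible N" unfolding N_def by (rule lipschitz_ae_differentiable[OF lip])
  define H where "H = (\<lambda>n. 1 / real (Suc n))"
  have H0: "0 < H n" for n unfolding H_def by simp
  have Hlim: "H \<longlonglongrightarrow> 0"
    unfolding H_def using LIMSEQ_inverse_real_of_nat by (simp add: inverse_eq_divide)
  define fn where "fn = (\<lambda>n x. (f (x + H n) - f x) / H n)"
  define S where "S = {a..b} - N"
  have contfn: "continuous_on A (fn n)" for n A
    unfolding fn_def using lb(3) H0[of n]
    by (intro continuous_intros continuous_on_compose2[OF lb(3)]) auto
  have intfn: "fn n integrable_on {a..b}" for n using contfn by (rule integrable_continuous_real)
  have spk1: "negligible {x \<in> {a..b} - S. h x \<noteq> 0}" for h :: "real \<Rightarrow> real"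
    by (rule negligible_subset[OF Nneg]) (auto simp: S_def)
  have spk2: "negligible {x \<in> S - {a..b}. h x \<noteq> 0}" for h :: "real \<Rightarrow> real"
    by (rule negligible_subset[of "{}"]) (auto simp: S_def)
  have intfnS: "fn n integrable_on S" for n by (rule integrable_spike_set[OF intfn spk1 spk2])
  have bndfn: "norm (fn n x) \<le> L" for n x
  proof -
    have "\<bar>f (x + H n) - f x\<bar> \<le> L * H n" using lb(2)[of "x + H n" x] H0[of n] by simp
    then show ?thesis unfolding fn_def using H0[of n] by (simp add: abs_divide divide_le_eq)
  qed
  have conv: "(\<lambda>n. fn n x) \<longlonglongrightarrow> deriv f x" if "x \<in> S" for x
  proof -
    have "f differentiable at x" using that unfolding S_def N_def by simp
    then have "(f has_real_derivative deriv f x) (at x)" by (simp add: DERIV_deriv_iff_real_differentiable)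
    then have "((\<lambda>k. (f (x + k) - f x) / k) \<longlongrightarrow> deriv f x) (at 0)" by (simp add: DERIV_def)
    moreover have "\<forall>i. H i \<in> UNIV - {0}" using H0 by (metis DiffI UNIV_I less_irrefl singletonD)
    ultimately have "((\<lambda>k. (f (x + k) - f x) / k) \<circ> H) \<longlonglongrightarrow> deriv f x"
      using Hlim tendsto_at_iff_sequentially[where s=UNIV] by blast
    then show ?thesis unfolding fn_def comp_def .
  qed
  have intL: "(\<lambda>x. L) integrable_on S" using integrable_spike_set[OF integrable_const_ivl spk1 spk2] by simp
  have le: "\<And>k x. x \<in> S \<Longrightarrow> norm (fn k x) \<le> L" using bndfn by blast
  note dc = dominated_convergence[OF intfnS intL le conv]
  have eqn: "integral S (fn n) = integral {b..b + H n} f / H n - integral {a..a + H n} f / H n" for n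
  proof -
    have c: "continuous_on A f" for A using lb(3) continuous_on_subset by blast
    have i: "f integrable_on A" if "A = {u..v}" for A u v using c that integrable_continuous_real by blast
    have "integral S (fn n) = integral {a..b} (fn n)" by (rule integral_spike_set[OF spk2 spk1])
    also have "\<dots> = (integral {a..b} (\<lambda>x. f (x + H n)) - integral {a..b} f) / H n"
    proof -
      have "integral {a..b} (fn n) = integral {a..b} (\<lambda>x. f (x + H n) - f x) / H n"
        unfolding fn_def by (rule integral_divide)
      also have "integral {a..b} (\<lambda>x. f (x + H n) - f x) = integral {a..b} (\<lambda>x. f (x + H n)) - integral {a..b} f"
      proof (rule integral_diff)
        show "(\<lambda>x. f (x + H n)) integrable_on {a..b}"
          by (intro integrable_continuous_real continuous_on_compose2[OF lb(3)] continuous_intros) auto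
        show "f integrable_on {a..b}" using i by blast
      qed
      finally show ?thesis .
    qed
    also have "integral {a..b} (\<lambda>x. f (x + H n)) = integral {a + H n..b + H n} f"
    proof -
      have "(\<lambda>x. f (x + H n)) = f \<circ> (+) (H n)" by (rule ext) (simp add: add.commute)
      then show ?thesis using integral_shift_Icc_real[of a b f "H n"] by simp
    qed
    also have "integral {a + H n..b + H n} f - integral {a..b} f = integral {b..b + H n} f - integral {a..a + H n} f"
    proof -
      have ib: "f integrable_on {a..b + H n}" by (rule integrable_continuous_real[OF c])
      have "integral {a..a + H n} f + integral {a + H n..b + H n} f = integral {a..b + H n} f"
        by (rule Henstock_Kurzweil_Integration.integral_combine[OF _ _ ib]) (use H0[of n] ab in auto)
      moreover have "integral {a..b} f + integral {b..b + H n} f = integral {a..b + H n} f"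
        by (rule Henstock_Kurzweil_Integration.integral_combine[OF _ _ ib]) (use H0[of n] ab in auto)
      ultimately show ?thesis by simp
    qed
    finally show ?thesis by (simp add: diff_divide_distrib)
  qed
  have "(\<lambda>n. integral {b..b + H n} f / H n - integral {a..a + H n} f / H n) \<longlonglongrightarrow> f b - f a"
    unfolding H_def by (intro tendsto_diff avg_lim[OF lip])
  then have "(\<lambda>n. integral S (fn n)) \<longlonglongrightarrow> f b - f a" unfolding eqn .
  then have "integral S (deriv f) = f b - f a" using dc(2) LIMSEQ_unique by blast
  then have "(deriv f has_integral (f b - f a)) S" using dc(1) by (metis has_integral_integral)
  then show ?thesis using has_integral_spike_set_eq[OF spk2[of "deriv f"] spk1[of "deriv f"]] by simp
qed

lemma chain_aff:
  fixes \<phi> :: "real \<Rightarrow> real"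
  assumes d\<phi>: "\<forall>x. \<phi> differentiable at x"
  shows "((\<lambda>t. \<phi> (a + t * b)) has_real_derivative deriv \<phi> a * b) (at 0)"
proof -
  have "(\<phi> has_real_derivative deriv \<phi> (a + 0 * b)) (at (a + 0 * b))"
    using d\<phi> by (simp add: DERIV_deriv_iff_real_differentiable)
  moreover have "((\<lambda>t. a + t * b) has_real_derivative b) (at 0)"
    by (auto intro!: derivative_eq_intros)
  ultimately have "((\<lambda>t. \<phi> (a + t * b)) has_real_derivative deriv \<phi> (a + 0 * b) * b) (at 0)"
    by (rule DERIV_chain2)
  then show ?thesis by simp
qed

lemma int_comp:
  fixes h W :: "real \<Rightarrow> real" and S :: "real set"
  assumes h: "continuous_on UNIV h" and S: "S \<in> lmeasurable" and W: "W \<in> borel_measurable (lebesgue_on S)"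
    and Wb: "\<And>x. x \<in> S \<Longrightarrow> \<bar>W x\<bar> \<le> B"
  shows "(\<lambda>x. h (W x)) integrable_on S"
proof -
  have "compact (h ` cball 0 B)" using h by (intro compact_continuous_image) (auto intro: continuous_on_subset)
  then obtain M where M: "\<forall>y\<in>h ` cball 0 B. norm y \<le> M" using compact_imp_bounded bounded_iff by blast
  show ?thesis
  proof (rule measurable_bounded_by_integrable_imp_integrable)
    show "(\<lambda>x. h (W x)) \<in> borel_measurable (lebesgue_on S)" by (rule borel_measurable_continuous_on[OF h W])
    show "(\<lambda>x. M) integrable_on S" using S by (rule integrable_on_const)
    show "S \<in> sets lebesgue" using S by auto
    fix x assume "x \<in> S"
    then have "W x \<in> cball 0 B" using Wb by (simp add: dist_real_def)
    then show "norm (h (W x)) \<le> M" using M by blast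
  qed
qed

lemma dui:
  fixes \<phi> W :: "real \<Rightarrow> real" and S :: "real set" and c B :: real
  assumes d\<phi>: "\<forall>x. \<phi> differentiable at x" and c\<phi>: "continuous_on UNIV (deriv \<phi>)"
    and S: "S \<in> lmeasurable" and W: "W integrable_on S" and Wb: "\<And>x. x \<in> S \<Longrightarrow> \<bar>W x\<bar> \<le> B"
    and B0: "0 \<le> B"
  shows "((\<lambda>t. integral S (\<lambda>x. \<phi> (c + t * W x))) has_real_derivative deriv \<phi> c * integral S W) (at 0)"
proof -
  have cont\<phi>: "continuous_on UNIV \<phi>"
    using d\<phi> by (intro continuous_at_imp_continuous_on) (auto intro: differentiable_imp_continuous_within)
  have Wm: "W \<in> borel_measurable (lebesgue_on S)" using W by (rule integrable_imp_measurable)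
  have intt: "(\<lambda>x. \<phi> (c + t * W x)) integrable_on S" for t
  proof -
    have "continuous_on UNIV (\<lambda>w. \<phi> (c + t * w))"
      by (rule continuous_on_compose2[OF cont\<phi>]) (auto intro!: continuous_intros)
    from int_comp[OF this S Wm Wb] show ?thesis .
  qed
  define \<Gamma> where "\<Gamma> = (\<lambda>t. integral S (\<lambda>x. \<phi> (c + t * W x)))"
  have "((\<lambda>h. (\<Gamma> (0 + h) - \<Gamma> 0) / h) \<longlongrightarrow> deriv \<phi> c * integral S W) (at 0)"
    unfolding tendsto_at_iff_sequentially
  proof (intro allI impI)
    fix X :: "nat \<Rightarrow> real" assume X0: "\<forall>i. X i \<in> UNIV - {0}" and Xl: "X \<longlonglongrightarrow> 0"
    have "Bseq X" using Xl by (intro convergent_imp_Bseq convergentI)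
    then obtain T where T: "0 < T" "\<And>n. \<bar>X n\<bar> \<le> T" unfolding Bseq_def by auto
    have "compact (deriv \<phi> ` cball c (T * B))" using c\<phi> by (intro compact_continuous_image) (auto intro: continuous_on_subset)
    then obtain M where M: "\<forall>y\<in>deriv \<phi> ` cball c (T * B). norm y \<le> M" using compact_imp_bounded bounded_iff by blast
    have M0: "0 \<le> M" using M T(1) B0 by (metis abs_ge_zero centre_in_cball imageI order_trans real_norm_def zero_le_mult_iff less_imp_le)
    have mvt: "\<bar>\<phi> (c + s) - \<phi> c\<bar> \<le> M * \<bar>s\<bar>" if "\<bar>s\<bar> \<le> T * B" for s
    proof -
      have "norm (\<phi> (c + s) - \<phi> c) \<le> M * norm ((c + s) - c)"
      proof (rule field_differentiable_bound[of "cball c (T * B)" \<phi> "deriv \<phi>"])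
        show "convex (cball c (T * B))" by simp
        show "(\<phi> has_field_derivative deriv \<phi> z) (at z within cball c (T * B))" for z
        proof -
          have "(\<phi> has_real_derivative deriv \<phi> z) (at z)" using d\<phi> DERIV_deriv_iff_real_differentiable by blast
          then show ?thesis by (rule has_field_derivative_at_within)
        qed
        show "norm (deriv \<phi> z) \<le> M" if "z \<in> cball c (T * B)" for z using M that by blast
        show "c + s \<in> cball c (T * B)" using that by (simp add: dist_real_def)
        show "c \<in> cball c (T * B)" using T(1) B0 by simp
      qed
      then show ?thesis by simp
    qed
    define fk where "fk = (\<lambda>n x. (\<phi> (c + X n * W x) - \<phi> c) / X n)"
    have Xn0: "X n \<noteq> 0" for n using X0 by auto
    have fkint: "fk n integrable_on S" for n
    proof -
      have "continuous_on UNIV (\<lambda>w. \<phi> (c + X n * w))"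
        by (rule continuous_on_compose2[OF cont\<phi>]) (auto intro!: continuous_intros)
      then have "continuous_on UNIV (\<lambda>w. (\<phi> (c + X n * w) - \<phi> c) / X n)"
        by (intro continuous_on_divide continuous_on_diff continuous_on_const) (auto simp: Xn0)
      from int_comp[OF this S Wm Wb] show ?thesis unfolding fk_def .
    qed
    have fkb: "norm (fk n x) \<le> M * B" if "x \<in> S" for n x
    proof -
      have "\<bar>X n * W x\<bar> \<le> T * B" using T(2)[of n] Wb[OF that] by (simp add: abs_mult mult_mono)
      from mvt[OF this] have "\<bar>\<phi> (c + X n * W x) - \<phi> c\<bar> \<le> M * (\<bar>X n\<bar> * \<bar>W x\<bar>)" by (simp add: abs_mult)
      then have "\<bar>fk n x\<bar> \<le> M * \<bar>W x\<bar>" unfolding fk_def using Xn0[of n]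
        by (simp add: abs_divide divide_le_eq mult.commute mult.left_commute)
      also have "\<dots> \<le> M * B" using Wb[OF that] M0 by (rule mult_left_mono)
      finally show ?thesis by simp
    qed
    have fkc: "(\<lambda>n. fk n x) \<longlonglongrightarrow> deriv \<phi> c * W x" if "x \<in> S" for x
    proof -
      have "((\<lambda>t. \<phi> (c + t * W x)) has_real_derivative deriv \<phi> c * W x) (at 0)" by (rule chain_aff[OF d\<phi>])
      then have "((\<lambda>h. (\<phi> (c + (0 + h) * W x) - \<phi> (c + 0 * W x)) / h) \<longlongrightarrow> deriv \<phi> c * W x) (at 0)"
        unfolding DERIV_def .
      then have "((\<lambda>h. (\<phi> (c + (0 + h) * W x) - \<phi> (c + 0 * W x)) / h) \<circ> X) \<longlonglongrightarrow> deriv \<phi> c * W x"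
        using X0 Xl unfolding tendsto_at_iff_sequentially by blast
      then show ?thesis unfolding fk_def comp_def by simp
    qed
    have intMB: "(\<lambda>x. M * B) integrable_on S" using S by (rule integrable_on_const)
    have lim: "(\<lambda>n. integral S (fk n)) \<longlonglongrightarrow> integral S (\<lambda>x. deriv \<phi> c * W x)"
      using dominated_convergence(2)[OF fkint intMB fkb fkc] .
    have eq: "integral S (fk n) = (\<Gamma> (0 + X n) - \<Gamma> 0) / X n" for n
    proof -
      have "integral S (fk n) = integral S (\<lambda>x. \<phi> (c + X n * W x) - \<phi> c) / X n"
        unfolding fk_def by (rule integral_divide)
      also have "integral S (\<lambda>x. \<phi> (c + X n * W x) - \<phi> c) = \<Gamma> (X n) - \<Gamma> 0"
        unfolding \<Gamma>_def using intt[of "X n"] intt[of 0] by (simp add: integral_diff)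
      finally show ?thesis by simp
    qed
    show "((\<lambda>h. (\<Gamma> (0 + h) - \<Gamma> 0) / h) \<circ> X) \<longlonglongrightarrow> deriv \<phi> c * integral S W"
      using lim unfolding comp_def eq[symmetric] by (simp add: integral_mult_right)
  qed
  then show ?thesis unfolding DERIV_def \<Gamma>_def .
qed

lemma deriv_lip_bound:
  fixes f :: "real \<Rightarrow> real"
  assumes lip: "L-lipschitz_on UNIV f" and d: "f differentiable at x"
  shows "\<bar>deriv f x\<bar> \<le> L"
proof -
  note lb = lip_bounds[OF lip]
  have "(f has_real_derivative deriv f x) (at x)" using d by (simp add: DERIV_deriv_iff_real_differentiable)
  then have t: "((\<lambda>k. (f (x + k) - f x) / k) \<longlongrightarrow> deriv f x) (at 0)" by (simp add: DERIV_def)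
  have "\<forall>\<^sub>F k in at 0. norm ((f (x + k) - f x) / k) \<le> L"
  proof (rule always_eventually, rule allI)
    fix k :: real
    show "norm ((f (x + k) - f x) / k) \<le> L"
    proof (cases "k = 0")
      case True then show ?thesis using lb(1) by simp
    next
      case False
      have "\<bar>f (x + k) - f x\<bar> \<le> L * \<bar>k\<bar>" using lb(2)[of "x + k" x] by simp
      then show ?thesis using False by (simp add: abs_divide divide_le_eq)
    qed
  qed
  from Lim_norm_ubound[OF _ t this] show ?thesis by simp
qed

definition clampN :: "nat \<Rightarrow> (real \<Rightarrow> real) \<Rightarrow> real \<Rightarrow> real" where
  "clampN N v = (\<lambda>x. v (max 0 (min (real N) x)))"

lemma clampN_lip:
  assumes "L-lipschitz_on {0..real N} v"
  shows "L-lipschitz_on UNIV (clampN N v)"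
  unfolding lipschitz_on_def
proof (intro conjI ballI)
  show "0 \<le> L" using assms by (simp add: lipschitz_on_def)
  fix x y :: real
  have m: "max 0 (min (real N) x) \<in> {0..real N}" "max 0 (min (real N) y) \<in> {0..real N}" by auto
  have "dist (clampN N v x) (clampN N v y) \<le> L * dist (max 0 (min (real N) x)) (max 0 (min (real N) y))"
    using assms m unfolding lipschitz_on_def clampN_def by blast
  also have "\<dots> \<le> L * dist x y" using \<open>0 \<le> L\<close> by (intro mult_left_mono) (auto simp: dist_real_def)
  finally show "dist (clampN N v x) (clampN N v y) \<le> L * dist x y" .
qed

lemma clampN_eq: "x \<in> {0..real N} \<Longrightarrow> clampN N v x = v x"
  unfolding clampN_def by simp

lemma cb_deriv:
  fixes \<phi> v :: "real \<Rightarrow> real" and N :: nat and \<alpha> \<beta> F r :: real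
  assumes d\<phi>: "\<forall>x. \<phi> differentiable at x" and c\<phi>: "continuous_on UNIV (deriv \<phi>)"
    and lipv: "L-lipschitz_on {0..real N} v" and ab: "0 \<le> \<alpha>" "\<alpha> \<le> \<beta>" "\<beta> \<le> real N" and r: "0 < r"
  shows "((\<lambda>t. 1 / r * integral {\<alpha><..<\<beta>} (\<lambda>x. \<phi> (r * deriv (\<lambda>x. F * x + t * v x) x)))
           has_real_derivative deriv \<phi> (r * F) * (v \<beta> - v \<alpha>)) (at 0)"
proof -
  define vt where "vt = clampN N v"
  have lipt: "L-lipschitz_on UNIV vt" unfolding vt_def by (rule clampN_lip[OF lipv])
  note lb = lip_bounds[OF lipt]
  define Nb where "Nb = {x. \<not> vt differentiable at x}"
  have Nneg: "negligible Nb" unfolding Nb_def by (rule lipschitz_ae_differentiable[OF lipt])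
  define W where "W = deriv vt"
  define S where "S = {\<alpha><..<\<beta>} - Nb"
  have ftc: "(W has_integral (vt \<beta> - vt \<alpha>)) {\<alpha>..\<beta>}" unfolding W_def by (rule lipschitz_ftc[OF lipt ab(2)])
  have vtab: "vt \<beta> - vt \<alpha> = v \<beta> - v \<alpha>" unfolding vt_def using ab by (simp add: clampN_eq)
  have sp1: "negligible {x \<in> {\<alpha>..\<beta>} - S. h x \<noteq> 0}" for h :: "real \<Rightarrow> real"
    by (rule negligible_subset[of "Nb \<union> {\<alpha>, \<beta>}"]) (use Nneg in \<open>auto simp: S_def\<close>)
  have sp2: "negligible {x \<in> S - {\<alpha>..\<beta>}. h x \<noteq> 0}" for h :: "real \<Rightarrow> real"
    by (rule negligible_subset[of "{}"]) (auto simp: S_def)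
  have WS: "(W has_integral (v \<beta> - v \<alpha>)) S"
    using ftc vtab has_integral_spike_set_eq[OF sp1[of W] sp2[of W]] by simp
  have Wint: "W integrable_on S" using WS by blast
  have Wi: "integral S W = v \<beta> - v \<alpha>" using WS by (rule integral_unique)
  have Wb: "\<bar>W x\<bar> \<le> L" if "x \<in> S" for x
    using that unfolding S_def Nb_def W_def by (intro deriv_lip_bound[OF lipt]) auto
  have Smeas: "S \<in> lmeasurable"
  proof (rule bounded_set_imp_lmeasurable)
    show "bounded S" unfolding S_def by (rule bounded_subset[of "{\<alpha>..\<beta>}"]) auto
    show "S \<in> sets lebesgue" unfolding S_def using Nneg by (intro sets.Diff) (auto intro: negligible_imp_sets)
  qed
  have dy: "deriv (\<lambda>x. F * x + t * v x) x = F + t * W x" if "x \<in> S" for x t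
  proof -
    have x: "x \<in> {0<..<real N}" "vt differentiable at x" using that ab unfolding S_def Nb_def by auto
    have "(vt has_real_derivative W x) (at x)" unfolding W_def using x(2)
      by (simp add: DERIV_deriv_iff_real_differentiable)
    then have "((\<lambda>x. F * x + t * vt x) has_real_derivative F + t * W x) (at x)"
      by (auto intro!: derivative_eq_intros)
    then have "((\<lambda>x. F * x + t * v x) has_real_derivative F + t * W x) (at x)"
    proof (rule has_field_derivative_transform_within_open)
      show "open {0<..<real N}" by simp
      show "x \<in> {0<..<real N}" by (rule x(1))
      fix z assume "z \<in> {0<..<real N}"
      then show "F * z + t * vt z = F * z + t * v z" unfolding vt_def by (simp add: clampN_eq)
    qed
    then show ?thesis by (rule DERIV_imp_deriv)
  qed
  have eqI: "integral {\<alpha><..<\<beta>} (\<lambda>x. \<phi> (r * deriv (\<lambda>x. F * x + t * v x) x))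
           = integral S (\<lambda>x. \<phi> (r * F + t * (r * W x)))" for t
  proof -
    have "integral {\<alpha><..<\<beta>} (\<lambda>x. \<phi> (r * deriv (\<lambda>x. F * x + t * v x) x))
        = integral S (\<lambda>x. \<phi> (r * deriv (\<lambda>x. F * x + t * v x) x))"
    proof (rule integral_spike_set)
      show "negligible {x \<in> {\<alpha><..<\<beta>} - S. \<phi> (r * deriv (\<lambda>x. F * x + t * v x) x) \<noteq> 0}"
        by (rule negligible_subset[OF Nneg]) (auto simp: S_def)
      show "negligible {x \<in> S - {\<alpha><..<\<beta>}. \<phi> (r * deriv (\<lambda>x. F * x + t * v x) x) \<noteq> 0}"
        by (rule negligible_subset[of "{}"]) (auto simp: S_def)
    qed
    also have "\<dots> = integral S (\<lambda>x. \<phi> (r * F + t * (r * W x)))"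
    proof (rule integral_cong)
      fix x assume xS: "x \<in> S"
      show "\<phi> (r * deriv (\<lambda>x. F * x + t * v x) x) = \<phi> (r * F + t * (r * W x))"
        unfolding dy[OF xS] by (simp add: algebra_simps)
    qed
    finally show ?thesis .
  qed
  have rW: "(\<lambda>x. r * W x) integrable_on S" using integrable_on_cmult_left[OF Wint, of r] by simp
  have rWb: "\<bar>r * W x\<bar> \<le> r * L" if "x \<in> S" for x using Wb[OF that] r by (simp add: abs_mult)
  have rL: "0 \<le> r * L" using \<open>0 < r\<close> \<open>0 \<le> L\<close> by simp
  have D: "((\<lambda>t. integral S (\<lambda>x. \<phi> (r * F + t * (r * W x)))) has_real_derivative
              deriv \<phi> (r * F) * integral S (\<lambda>x. r * W x)) (at 0)"
    by (rule dui[OF d\<phi> c\<phi> Smeas rW rWb rL])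
  have iW: "integral S (\<lambda>x. r * W x) = r * (v \<beta> - v \<alpha>)" using Wi by (simp add: integral_mult_right)
  have D2: "((\<lambda>t. 1 / r * integral S (\<lambda>x. \<phi> (r * F + t * (r * W x)))) has_real_derivative
              1 / r * (deriv \<phi> (r * F) * integral S (\<lambda>x. r * W x))) (at 0)"
    by (rule DERIV_cmult[OF D])
  have e: "1 / r * (deriv \<phi> (r * F) * integral S (\<lambda>x. r * W x)) = deriv \<phi> (r * F) * (v \<beta> - v \<alpha>)"
    unfolding iW using r by simp
  show ?thesis unfolding eqI using D2 unfolding e .
qed

definition Aterm :: "(real \<Rightarrow> real) \<Rightarrow> real \<Rightarrow> real \<Rightarrow> real set \<Rightarrow> (real \<Rightarrow> real) \<Rightarrow> real" where
  "Aterm \<phi> F rr \<omega> v = (if lenw \<omega> > 0 then deriv \<phi> (rr / lenw \<omega> * (F * (\<Sum>c\<in>components \<omega>. Sup c - Inf c))) * Dw \<omega> v else 0)"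

lemma Dw_affine: "Dw \<omega> (\<lambda>x. F * x + t * v x) = F * (\<Sum>c\<in>components \<omega>. Sup c - Inf c) + t * Dw \<omega> v"
  unfolding Dw_def by (simp add: sum.distrib sum_distrib_left algebra_simps sum_subtractf)

lemma ab_deriv:
  fixes \<phi> v :: "real \<Rightarrow> real"
  assumes d\<phi>: "\<forall>x. \<phi> differentiable at x" and r: "0 < real r"
  shows "((\<lambda>t. a_b \<phi> N R i r (\<lambda>x. F * x + t * v x)) has_real_derivative
            Aterm \<phi> F (real r) (bond i r \<inter> Omega_a N R) v) (at 0)"
proof -
  define \<omega> where "\<omega> = bond i r \<inter> Omega_a N R"
  define K0 where "K0 = (\<Sum>c\<in>components \<omega>. Sup c - Inf c)"
  define l where "l = lenw \<omega>"
  show ?thesis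
  proof (cases "l > 0")
    case True
    have f: "(\<lambda>t. a_b \<phi> N R i r (\<lambda>x. F * x + t * v x))
           = (\<lambda>t. l / real r * \<phi> (real r / l * (F * K0) + t * (real r / l * Dw \<omega> v)))"
      unfolding a_b_def Let_def \<omega>_def[symmetric] l_def[symmetric] Dw_affine K0_def[symmetric] using True
      by (intro ext) (simp add: algebra_simps)
    have "((\<lambda>t. l / real r * \<phi> (real r / l * (F * K0) + t * (real r / l * Dw \<omega> v))) has_real_derivative
            l / real r * (deriv \<phi> (real r / l * (F * K0)) * (real r / l * Dw \<omega> v))) (at 0)"
      by (rule DERIV_cmult[OF chain_aff[OF d\<phi>]])
    moreover have "l / real r * (deriv \<phi> (real r / l * (F * K0)) * (real r / l * Dw \<omega> v))
       = Aterm \<phi> F (real r) (bond i r \<inter> Omega_a N R) v"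
      unfolding Aterm_def \<omega>_def[symmetric] l_def[symmetric] K0_def[symmetric] using True r by simp
    ultimately show ?thesis unfolding f by simp
  next
    case False
    have f: "(\<lambda>t. a_b \<phi> N R i r (\<lambda>x. F * x + t * v x)) = (\<lambda>t. 0)"
      unfolding a_b_def Let_def \<omega>_def[symmetric] l_def[symmetric] using False by (intro ext) simp
    have "Aterm \<phi> F (real r) (bond i r \<inter> Omega_a N R) v = 0"
      unfolding Aterm_def \<omega>_def[symmetric] l_def[symmetric] using False by simp
    then show ?thesis unfolding f by simp
  qed
qed

lemma components_Ioo: "a < b \<Longrightarrow> components {a<..<b::real} = {{a<..<b}}"
  by (simp add: components_eq_sing_iff)

lemma Aterm_one:
  assumes "a < b"
  shows "Aterm \<phi> F rr {a<..<b} v = deriv \<phi> (rr * F) * (v b - v a)"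
proof -
  have "lenw {a<..<b} = b - a" using assms unfolding lenw_def by simp
  moreover have "Dw {a<..<b} v = v b - v a" using assms unfolding Dw_def by (simp add: components_Ioo)
  ultimately show ?thesis unfolding Aterm_def using assms by (simp add: components_Ioo)
qed

lemma Aterm_empty: "Aterm \<phi> F rr {} v = 0"
  unfolding Aterm_def lenw_def by simp

lemma components_two:
  fixes a b c d :: real
  assumes ab: "a < b" and bc: "b < c" and cd: "c < d"
  shows "components ({a<..<b} \<union> {c<..<d}) = {{a<..<b}, {c<..<d}}"
proof -
  define S where "S = {a<..<b} \<union> {c<..<d}"
  have gap: "b \<notin> S" unfolding S_def using bc by auto
  have sep: "D \<subseteq> {a<..<b} \<or> D \<subseteq> {c<..<d}" if D: "connected D" "D \<subseteq> S" for D
  proof (rule ccontr)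
    assume "\<not> (D \<subseteq> {a<..<b} \<or> D \<subseteq> {c<..<d})"
    then obtain x y where xy: "x \<in> D" "y \<in> D" "x \<notin> {a<..<b}" "y \<notin> {c<..<d}" by blast
    then have "x \<in> {c<..<d}" "y \<in> {a<..<b}" using D(2) unfolding S_def by auto
    then have "y \<le> b" "b \<le> x" using bc by auto
    then have "b \<in> D" using D(1) xy(1,2) unfolding connected_iff_interval by blast
    then show False using gap D(2) by blast
  qed
  have c1: "{a<..<b} \<in> components S"
    unfolding in_components_maximal
  proof (intro conjI allI impI)
    show "{a<..<b} \<noteq> {}" "{a<..<b} \<subseteq> S" "connected {a<..<b}" using ab unfolding S_def by auto
    fix D assume D: "D \<noteq> {} \<and> {a<..<b} \<subseteq> D \<and> D \<subseteq> S \<and> connected D"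
    have mid: "(a + b) / 2 \<in> {a<..<b}" using ab by auto
    then have "(a + b) / 2 \<in> D" using D by blast
    moreover have "(a + b) / 2 \<notin> {c<..<d}" using mid bc by auto
    ultimately have "\<not> D \<subseteq> {c<..<d}" by blast
    then show "D = {a<..<b}" using sep D by blast
  qed
  have c2: "{c<..<d} \<in> components S"
    unfolding in_components_maximal
  proof (intro conjI allI impI)
    show "{c<..<d} \<noteq> {}" "{c<..<d} \<subseteq> S" "connected {c<..<d}" using cd unfolding S_def by auto
    fix D assume D: "D \<noteq> {} \<and> {c<..<d} \<subseteq> D \<and> D \<subseteq> S \<and> connected D"
    have mid: "(c + d) / 2 \<in> {c<..<d}" using cd by auto
    then have "(c + d) / 2 \<in> D" using D by blast
    moreover have "(c + d) / 2 \<notin> {a<..<b}" using mid bc by auto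
    ultimately have "\<not> D \<subseteq> {a<..<b}" by blast
    then show "D = {c<..<d}" using sep D by blast
  qed
  have "C = {a<..<b} \<or> C = {c<..<d}" if C: "C \<in> components S" for C
  proof -
    have "C \<subseteq> {a<..<b} \<or> C \<subseteq> {c<..<d}" using sep in_components_connected[OF C] in_components_subset[OF C] by blast
    moreover have "C \<noteq> {}" using C by (rule in_components_nonempty)
    ultimately show ?thesis using components_nonoverlap[OF C c1] components_nonoverlap[OF C c2] by blast
  qed
  then show ?thesis using c1 c2 unfolding S_def by blast
qed

lemma Aterm_two:
  fixes a b c d :: real
  assumes ab: "a < b" and bc: "b < c" and cd: "c < d"
  shows "Aterm \<phi> F rr ({a<..<b} \<union> {c<..<d}) v = deriv \<phi> (rr * F) * (v b - v a + (v d - v c))"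
proof -
  have ne: "{a<..<b} \<noteq> {c<..<d}"
  proof
    assume eq: "{a<..<b} = {c<..<d}"
    have "(a + b) / 2 \<in> {a<..<b}" using ab by auto
    then have "(a + b) / 2 \<in> {c<..<d}" unfolding eq .
    then show False using ab bc by auto
  qed
  have l: "lenw ({a<..<b} \<union> {c<..<d}) = (b - a) + (d - c)"
  proof -
    have "measure lborel ({a<..<b} \<union> {c<..<d}) = measure lborel {a<..<b} + measure lborel {c<..<d}"
    proof (rule measure_Union)
      show "emeasure lborel {a<..<b} \<noteq> \<infinity>" "emeasure lborel {c<..<d} \<noteq> \<infinity>" using ab cd by simp_all
      show "{a<..<b} \<in> sets lborel" "{c<..<d} \<in> sets lborel" by simp_all
      show "{a<..<b} \<inter> {c<..<d} = {}" using bc by auto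
    qed
    then show ?thesis unfolding lenw_def using ab cd by simp
  qed
  have s: "(\<Sum>c\<in>components ({a<..<b} \<union> {c<..<d}). Sup c - Inf c) = (b - a) + (d - c)"
    unfolding components_two[OF assms] using ne ab cd by simp
  have D: "Dw ({a<..<b} \<union> {c<..<d}) v = v b - v a + (v d - v c)"
    unfolding Dw_def components_two[OF assms] using ne ab cd by simp
  have pos: "0 < (b - a) + (d - c)" using ab cd by simp
  show ?thesis unfolding Aterm_def l s D using pos by simp
qed

lemma bond_lemma:
  fixes N R :: nat and \<phi> v :: "real \<Rightarrow> real" and F :: real and i :: int and r :: nat
  assumes N1: "N \<ge> 1" and d\<phi>: "\<forall>x. \<phi> differentiable at x" and c\<phi>: "continuous_on UNIV (deriv \<phi>)"
    and b: "(i, r) \<in> bondset N R" and v: "v \<in> U N"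
  shows "\<exists>A C. has_gderiv (a_b \<phi> N R i r) (\<lambda>x. F * x) v A
                \<and> has_gderiv (c_b \<phi> N i r) (\<lambda>x. F * x) v C
                \<and> has_gderiv (e_b \<phi> i r) (\<lambda>x. F * x) v
                     (deriv \<phi> (real r * F) * (v (real_of_int i + real r) - v (real_of_int i)))
                \<and> A + C = deriv \<phi> (real r * F) * (v (real_of_int i + real r) - v (real_of_int i))"
proof -
  have r1: "1 \<le> r" and iI: "- (int N + int R) < i" "i < int N + int R"
    and irI: "- (int N + int R) < i + int r" "i + int r < int N + int R"
    using b unfolding bondset_def Iset_def by auto
  obtain L where lipv: "L-lipschitz_on {0..real N} v" using v unfolding U_def by auto
  define ri where "ri = real_of_int i"
  define rr where "rr = real r"
  define rN where "rN = real N"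
  have rr0: "0 < rr" using r1 unfolding rr_def by simp
  have rN1: "1 \<le> rN" using N1 unfolding rN_def by simp
  have ri1: "- (rN + real R) < ri" "ri + rr < rN + real R"
    using iI(1) irI(2) unfolding ri_def rr_def rN_def by linarith+
  have om: "bond i r \<inter> Omega_a N R = {ri<..<ri + rr} - {0..rN}"
    unfolding bond_def Omega_a_def ri_def[symmetric] rr_def[symmetric] rN_def[symmetric] using ri1 rr0 by auto
  have oc: "bond i r \<inter> Omega_c N = {ri<..<ri + rr} \<inter> {0<..<rN}"
    unfolding bond_def Omega_c_def ri_def[symmetric] rr_def[symmetric] rN_def[symmetric] by auto
  define D where "D = deriv \<phi> (rr * F)"
  have key: "\<exists>\<alpha> \<beta>. 0 \<le> \<alpha> \<and> \<alpha> \<le> \<beta> \<and> \<beta> \<le> rN \<and> bond i r \<inter> Omega_c N = {\<alpha><..<\<beta>}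
     \<and> Aterm \<phi> F rr (bond i r \<inter> Omega_a N R) v + D * (v \<beta> - v \<alpha>) = D * (v (ri + rr) - v ri)"
  proof (cases "i + int r \<le> 0")
    case True
    then have h: "ri + rr \<le> 0" unfolding ri_def rr_def by linarith
    have "bond i r \<inter> Omega_a N R = {ri<..<ri + rr}" unfolding om using h by auto
    moreover have "bond i r \<inter> Omega_c N = {0<..<0}" unfolding oc using h by auto
    ultimately show ?thesis using rr0 rN1 unfolding D_def by (intro exI[of _ 0]) (simp add: Aterm_one)
  next
    case nA: False
    show ?thesis
    proof (cases "int N \<le> i")
      case True
      then have h: "rN \<le> ri" unfolding ri_def rN_def by linarith
      have "bond i r \<inter> Omega_a N R = {ri<..<ri + rr}" unfolding om using h by auto
      moreover have "bond i r \<inter> Omega_c N = {0<..<0}" unfolding oc using h by auto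
      ultimately show ?thesis using rr0 rN1 unfolding D_def by (intro exI[of _ 0]) (simp add: Aterm_one)
    next
      case nB: False
      have h0: "0 < ri + rr" "ri < rN" using nA nB unfolding ri_def rr_def rN_def by linarith+
      show ?thesis
      proof (cases "i < 0")
        case neg: True
        have hi: "ri < 0" using neg unfolding ri_def by simp
        show ?thesis
        proof (cases "i + int r \<le> int N")
          case True
          have h: "ri + rr \<le> rN" using True unfolding ri_def rr_def rN_def by linarith
          have "bond i r \<inter> Omega_a N R = {ri<..<0}" unfolding om using h hi h0 by auto
          moreover have "bond i r \<inter> Omega_c N = {0<..<ri + rr}" unfolding oc using h hi h0 by auto
          ultimately show ?thesis using h hi h0 unfolding D_def
            by (intro exI[of _ 0] exI[of _ "ri + rr"]) (simp add: Aterm_one algebra_simps)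
        next
          case False
          have h: "rN < ri + rr" using False unfolding ri_def rr_def rN_def by linarith
          have "bond i r \<inter> Omega_a N R = {ri<..<0} \<union> {rN<..<ri + rr}" unfolding om using h hi h0 rN1 by auto
          moreover have "bond i r \<inter> Omega_c N = {0<..<rN}" unfolding oc using h hi h0 by auto
          moreover have "Aterm \<phi> F rr ({ri<..<0} \<union> {rN<..<ri + rr}) v = D * (v 0 - v ri + (v (ri + rr) - v rN))"
            unfolding D_def using hi rN1 h by (intro Aterm_two) auto
          ultimately show ?thesis using h hi h0 rN1
            by (intro exI[of _ 0] exI[of _ "rN"]) (simp add: algebra_simps)
        qed
      next
        case nneg: False
        have hi: "0 \<le> ri" using nneg unfolding ri_def by simp
        show ?thesis
        proof (cases "i + int r \<le> int N")
          case True
          have h: "ri + rr \<le> rN" using True unfolding ri_def rr_def rN_def by linarith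
          have "bond i r \<inter> Omega_a N R = {}" unfolding om using h hi by auto
          moreover have "bond i r \<inter> Omega_c N = {ri<..<ri + rr}" unfolding oc using h hi by auto
          ultimately show ?thesis using h hi rr0
            by (intro exI[of _ ri] exI[of _ "ri + rr"]) (simp add: Aterm_empty)
        next
          case False
          have h: "rN < ri + rr" using False unfolding ri_def rr_def rN_def by linarith
          have "bond i r \<inter> Omega_a N R = {rN<..<ri + rr}" unfolding om using h hi h0 by auto
          moreover have "bond i r \<inter> Omega_c N = {ri<..<rN}" unfolding oc using h hi h0 by auto
          ultimately show ?thesis using h hi h0 unfolding D_def
            by (intro exI[of _ ri] exI[of _ rN]) (simp add: Aterm_one algebra_simps)
        qed
      qed
    qed
  qed
  then obtain \<alpha> \<beta> where ab: "0 \<le> \<alpha>" "\<alpha> \<le> \<beta>" "\<beta> \<le> rN" "bond i r \<inter> Omega_c N = {\<alpha><..<\<beta>}"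
    and sumeq: "Aterm \<phi> F rr (bond i r \<inter> Omega_a N R) v + D * (v \<beta> - v \<alpha>) = D * (v (ri + rr) - v ri)"
    by blast
  have A: "has_gderiv (a_b \<phi> N R i r) (\<lambda>x. F * x) v (Aterm \<phi> F rr (bond i r \<inter> Omega_a N R) v)"
    unfolding has_gderiv_def rr_def using ab_deriv[OF d\<phi>, of r N R i F v] rr0 unfolding rr_def by simp
  have C: "has_gderiv (c_b \<phi> N i r) (\<lambda>x. F * x) v (D * (v \<beta> - v \<alpha>))"
  proof -
    have "((\<lambda>t. 1 / rr * integral {\<alpha><..<\<beta>} (\<lambda>x. \<phi> (rr * deriv (\<lambda>x. F * x + t * v x) x)))
           has_real_derivative deriv \<phi> (rr * F) * (v \<beta> - v \<alpha>)) (at 0)"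
      using ab(3) unfolding rN_def by (intro cb_deriv[OF d\<phi> c\<phi> lipv ab(1,2) _ rr0])
    then show ?thesis unfolding has_gderiv_def c_b_def ab(4) D_def rr_def by simp
  qed
  have E: "has_gderiv (e_b \<phi> i r) (\<lambda>x. F * x) v (D * (v (ri + rr) - v ri))"
  proof -
    have f: "(\<lambda>t. e_b \<phi> i r (\<lambda>x. F * x + t * v x)) = (\<lambda>t. \<phi> (rr * F + t * (v (ri + rr) - v ri)))"
      unfolding e_b_def ri_def rr_def by (intro ext) (simp add: algebra_simps)
    show ?thesis unfolding has_gderiv_def f D_def by (rule chain_aff[OF d\<phi>])
  qed
  show ?thesis using A C E sumeq unfolding D_def ri_def rr_def by blast
qed

lemma bondset_finite: "finite (bondset N R)"
proof (rule finite_subset)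
  show "bondset N R \<subseteq> {- (int N + int R)<..<int N + int R} \<times> {1..R}"
    unfolding bondset_def Iset_def by auto
qed simp

lemma tele:
  fixes d :: "nat \<Rightarrow> real"
  assumes v: "v \<in> U0 N R"
  shows "(\<Sum>(i, r)\<in>bondset N R. d r * (v (real_of_int i + real r) - v (real_of_int i))) = 0"
proof -
  have vz: "v (real_of_int j) = 0" if "j \<in> Iset N R" "int N \<le> \<bar>j\<bar>" for j
    using v that unfolding U0_def ID_def Iset_def by auto
  define g where "g = (\<lambda>(j, r::nat). d r * v (real_of_int j))"
  define M where "M = {(j, r). 1 \<le> r \<and> r \<le> R \<and> \<bar>j\<bar> < int N}"
  define sh where "sh = (\<lambda>(i, r::nat). (i + int r, r))"
  have fin: "finite (bondset N R)" by (rule bondset_finite)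
  have MB: "M \<subseteq> bondset N R" unfolding M_def bondset_def Iset_def by auto
  have MT: "M \<subseteq> sh ` bondset N R"
  proof
    fix x assume "x \<in> M"
    then obtain j r where x: "x = (j, r)" "1 \<le> r" "r \<le> R" "\<bar>j\<bar> < int N" unfolding M_def by auto
    then have "(j - int r, r) \<in> bondset N R" unfolding bondset_def Iset_def by auto
    moreover have "sh (j - int r, r) = x" unfolding sh_def x by simp
    ultimately show "x \<in> sh ` bondset N R" by force
  qed
  have injsh: "inj_on sh (bondset N R)" unfolding sh_def inj_on_def by auto
  have S2: "(\<Sum>x\<in>bondset N R. g x) = (\<Sum>x\<in>M. g x)"
  proof (rule sum.mono_neutral_right[OF fin MB])
    show "\<forall>x\<in>bondset N R - M. g x = 0"
    proof
      fix x assume x: "x \<in> bondset N R - M"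
      then obtain i r where xi: "x = (i, r)" by (cases x)
      have "i \<in> Iset N R" "int N \<le> \<bar>i\<bar>" using x unfolding xi bondset_def M_def by auto
      then show "g x = 0" unfolding xi g_def using vz by simp
    qed
  qed
  have S1: "(\<Sum>x\<in>sh ` bondset N R. g x) = (\<Sum>x\<in>M. g x)"
  proof (rule sum.mono_neutral_right[OF _ MT])
    show "finite (sh ` bondset N R)" using fin by simp
    show "\<forall>x\<in>sh ` bondset N R - M. g x = 0"
    proof
      fix x assume x: "x \<in> sh ` bondset N R - M"
      then obtain i r where b: "(i, r) \<in> bondset N R" and xi: "x = (i + int r, r)" unfolding sh_def by auto
      have "i + int r \<in> Iset N R" "1 \<le> r" "r \<le> R" using b unfolding bondset_def by auto
      moreover have "\<not> \<bar>i + int r\<bar> < int N" using x \<open>1 \<le> r\<close> \<open>r \<le> R\<close> unfolding xi M_def by auto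
      ultimately have "v (real_of_int (i + int r)) = 0" by (intro vz) auto
      then show "g x = 0" unfolding xi g_def by simp
    qed
  qed
  have "(\<Sum>x\<in>sh ` bondset N R. g x) = (\<Sum>x\<in>bondset N R. g (sh x))" by (rule sum.reindex[OF injsh, unfolded comp_def])
  also have "\<dots> = (\<Sum>(i, r)\<in>bondset N R. d r * v (real_of_int i + real r))"
    unfolding g_def sh_def by (intro sum.cong refl) auto
  finally have S1': "(\<Sum>(i, r)\<in>bondset N R. d r * v (real_of_int i + real r)) = (\<Sum>x\<in>M. g x)" using S1 by simp
  have S2': "(\<Sum>(i, r)\<in>bondset N R. d r * v (real_of_int i)) = (\<Sum>x\<in>M. g x)"
    using S2 unfolding g_def by simp
  have "(\<Sum>(i, r)\<in>bondset N R. d r * (v (real_of_int i + real r) - v (real_of_int i)))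
      = (\<Sum>(i, r)\<in>bondset N R. d r * v (real_of_int i + real r)) - (\<Sum>(i, r)\<in>bondset N R. d r * v (real_of_int i))"
    by (simp add: right_diff_distrib sum_subtractf case_prod_beta)
  then show ?thesis using S1' S2' by simp
qed

theorem mainTheorem5:
  fixes N R :: nat and \<phi> :: "real \<Rightarrow> real" and F :: real
  assumes "N \<ge> 1" and "R \<ge> 1"
    and "\<forall>x. \<phi> differentiable at x" and "continuous_on UNIV (deriv \<phi>)"
    and "F > 0"
  shows "(\<forall>v \<in> U0 N R. has_gderiv (E_acc \<phi> N R) (\<lambda>x. F * x) v 0)
       \<and> (\<forall>(i, r) \<in> bondset N R. \<forall>v \<in> U N.
           \<exists>A C. has_gderiv (a_b \<phi> N R i r) (\<lambda>x. F * x) v A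
                \<and> has_gderiv (c_b \<phi> N i r) (\<lambda>x. F * x) v C
                \<and> has_gderiv (e_b \<phi> i r) (\<lambda>x. F * x) v
                     (deriv \<phi> (real r * F) * (v (real_of_int i + real r) - v (real_of_int i)))
                \<and> A + C = deriv \<phi> (real r * F) * (v (real_of_int i + real r) - v (real_of_int i)))"
proof -
  have BL: "\<And>i r v. (i, r) \<in> bondset N R \<Longrightarrow> v \<in> U N \<Longrightarrow> \<exists>A C. has_gderiv (a_b \<phi> N R i r) (\<lambda>x. F * x) v A
                \<and> has_gderiv (c_b \<phi> N i r) (\<lambda>x. F * x) v C
                \<and> has_gderiv (e_b \<phi> i r) (\<lambda>x. F * x) v
                     (deriv \<phi> (real r * F) * (v (real_of_int i + real r) - v (real_of_int i)))
                \<and> A + C = deriv \<phi> (real r * F) * (v (real_of_int i + real r) - v (real_of_int i))"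
    by (rule bond_lemma[OF assms(1,3,4)])
  have second: "\<forall>(i, r) \<in> bondset N R. \<forall>v \<in> U N.
           \<exists>A C. has_gderiv (a_b \<phi> N R i r) (\<lambda>x. F * x) v A
                \<and> has_gderiv (c_b \<phi> N i r) (\<lambda>x. F * x) v C
                \<and> has_gderiv (e_b \<phi> i r) (\<lambda>x. F * x) v
                     (deriv \<phi> (real r * F) * (v (real_of_int i + real r) - v (real_of_int i)))
                \<and> A + C = deriv \<phi> (real r * F) * (v (real_of_int i + real r) - v (real_of_int i))"
    using BL by blast
  have first: "has_gderiv (E_acc \<phi> N R) (\<lambda>x. F * x) v 0" if v0: "v \<in> U0 N R" for v
  proof -
    have vU: "v \<in> U N" using v0 unfolding U0_def by simp
    define Dd where "Dd = (\<lambda>b::int \<times> nat. deriv \<phi> (real (snd b) * F) * (v (real_of_int (fst b) + real (snd b)) - v (real_of_int (fst b))))"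
    have "\<forall>b\<in>bondset N R. \<exists>AC. has_gderiv (a_b \<phi> N R (fst b) (snd b)) (\<lambda>x. F * x) v (fst AC)
             \<and> has_gderiv (c_b \<phi> N (fst b) (snd b)) (\<lambda>x. F * x) v (snd AC) \<and> fst AC + snd AC = Dd b"
    proof
      fix b assume b: "b \<in> bondset N R"
      obtain i r where bi: "b = (i, r)" by (cases b)
      obtain A C where "has_gderiv (a_b \<phi> N R i r) (\<lambda>x. F * x) v A" "has_gderiv (c_b \<phi> N i r) (\<lambda>x. F * x) v C"
        "A + C = deriv \<phi> (real r * F) * (v (real_of_int i + real r) - v (real_of_int i))"
        using BL[OF b[unfolded bi] vU] by blast
      then show "\<exists>AC. has_gderiv (a_b \<phi> N R (fst b) (snd b)) (\<lambda>x. F * x) v (fst AC)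
             \<and> has_gderiv (c_b \<phi> N (fst b) (snd b)) (\<lambda>x. F * x) v (snd AC) \<and> fst AC + snd AC = Dd b"
        unfolding bi Dd_def by (intro exI[of _ "(A, C)"]) simp
    qed
    then obtain AC where AC: "\<And>b. b \<in> bondset N R \<Longrightarrow> has_gderiv (a_b \<phi> N R (fst b) (snd b)) (\<lambda>x. F * x) v (fst (AC b))"
      "\<And>b. b \<in> bondset N R \<Longrightarrow> has_gderiv (c_b \<phi> N (fst b) (snd b)) (\<lambda>x. F * x) v (snd (AC b))"
      "\<And>b. b \<in> bondset N R \<Longrightarrow> fst (AC b) + snd (AC b) = Dd b"
      by metis
    have Da: "((\<lambda>t. \<Sum>b\<in>bondset N R. a_b \<phi> N R (fst b) (snd b) (\<lambda>x. F * x + t * v x)) has_real_derivative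
               (\<Sum>b\<in>bondset N R. fst (AC b))) (at 0)"
      by (rule DERIV_sum) (use AC(1) in \<open>simp add: has_gderiv_def\<close>)
    have Dc: "((\<lambda>t. \<Sum>b\<in>bondset N R. c_b \<phi> N (fst b) (snd b) (\<lambda>x. F * x + t * v x)) has_real_derivative
               (\<Sum>b\<in>bondset N R. snd (AC b))) (at 0)"
      by (rule DERIV_sum) (use AC(2) in \<open>simp add: has_gderiv_def\<close>)
    have "(\<Sum>b\<in>bondset N R. fst (AC b)) + (\<Sum>b\<in>bondset N R. snd (AC b)) = (\<Sum>b\<in>bondset N R. Dd b)"
      using AC(3) by (simp add: sum.distrib[symmetric])
    also have "\<dots> = 0" using tele[OF v0, of "\<lambda>r. deriv \<phi> (real r * F)"] unfolding Dd_def by (simp add: case_prod_beta)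
    finally have z: "(\<Sum>b\<in>bondset N R. fst (AC b)) + (\<Sum>b\<in>bondset N R. snd (AC b)) = 0" .
    have "((\<lambda>t. E_acc \<phi> N R (\<lambda>x. F * x + t * v x)) has_real_derivative 0) (at 0)"
      using DERIV_add[OF Da Dc] unfolding z E_acc_def by (simp add: case_prod_beta)
    then show ?thesis unfolding has_gderiv_def by simp
  qed
  show ?thesis using first second by blast
qed

end
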